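(* Under the setting below, the polygon-constrained half-$\Theta_6$-graph $G_\infty$ is plane (no two of its edges properly cross).
   Context: Setting: $V$ is a finite set of points (vertices) in the plane and $S$ a finite set of simple polygonal obstacles, pairwise non-intersecting, all of whose corners lie in $V$; each vertex of $V$ is a corner of at most one obstacle and occurs at most once on its boundary ($V$ may contain vertices that are not obstacle corners). General position: no three vertices are collinear and no two vertices lie on a line parallel to a boundary ray of one of the cones defined below. Two points $p,q$ are visible if segment $pq$ does not properly intersect any obstacle (it may touch obstacles at vertices or run along their boundaries, but may not meet an obstacle's interior); $pq$ is then a visibility edge. Cones: around each vertex $u$ the plane is partitioned into six cones of angle $\pi/3$ with apex $u$; the cone whose bisector is the upward vertical ray from $u$ is $C_0^u$, and in counterclockwise order the cones are $C_0^u,\overline{C_2^u},C_1^u,\overline{C_0^u},C_2^u,\overline{C_1^u}$. Cones $C_i^u$ are positive, $\overline{C_i^u}$ negative; indices are taken mod 3. If the obstacle having $u$ as a corner splits a cone of $u$ so that there are vertices visible from $u$ on both sides of the obstacle within that cone, the cone is regarded as two subcones (the parts on either side of the obstacle); otherwise the cone is a single subcone. $G_\infty$: for every vertex $u$ and every positive subcone of $u$, add an (undirected) edge from $u$ to the vertex visible from $u$ in that subcone whose orthogonal projection onto the bisector of the cone is closest to $u$ (if such a vertex exists). Edges are weighted by Euclidean length. *)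

theory Defs
  imports "HOL-Analysis.Analysis"
begin

type_synonym pt = "real \<times> real"

definition poly_edge :: "pt list \<Rightarrow> nat \<Rightarrow> pt set" where
  "poly_edge P i = closed_segment (P ! i) (P ! ((i + 1) mod length P))"

definition poly_boundary :: "pt list \<Rightarrow> pt set" where
  "poly_boundary P = (\<Union>i<length P. poly_edge P i)"

definition simple_polygon :: "pt list \<Rightarrow> bool" where
  "simple_polygon P \<longleftrightarrow> length P \<ge> 3 \<and> distinct P \<and>
     (\<forall>i<length P. \<forall>j<length P. i \<noteq> j \<longrightarrow>
        (if j = (i + 1) mod length P then poly_edge P i \<inter> poly_edge P j = {P ! j}
         else if i = (j + 1) mod length P then poly_edge P i \<inter> poly_edge P j = {P ! i}
         else poly_edge P i \<inter> poly_edge P j = {}))"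

definition poly_interior :: "pt list \<Rightarrow> pt set" where
  "poly_interior P = inside (poly_boundary P)"

definition visible :: "pt list set \<Rightarrow> pt \<Rightarrow> pt \<Rightarrow> bool" where
  "visible S p q \<longleftrightarrow> (\<forall>P\<in>S. closed_segment p q \<inter> poly_interior P = {})"

definition dir :: "real \<Rightarrow> pt" where
  "dir \<theta> = (cos \<theta>, sin \<theta>)"

definition dotp :: "pt \<Rightarrow> pt \<Rightarrow> real" where
  "dotp a b = fst a * fst b + snd a * snd b"

text \<open>Bisector angle of the positive cone C_i (i = 0,1,2): C_0 points upward,
  and C_1, C_2 follow at angles 2pi/3 counterclockwise.\<close>
definition bisector :: "nat \<Rightarrow> real" where
  "bisector i = pi / 2 + real i * (2 * pi / 3)"

definition proj :: "pt \<Rightarrow> nat \<Rightarrow> pt \<Rightarrow> real" where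
  "proj u i v = dotp (v - u) (dir (bisector i))"

definition in_pcone :: "pt \<Rightarrow> nat \<Rightarrow> pt \<Rightarrow> bool" where
  "in_pcone u i v \<longleftrightarrow> v \<noteq> u \<and> proj u i v \<ge> cos (pi / 6) * dist v u"

definition sector :: "pt \<Rightarrow> pt \<Rightarrow> pt \<Rightarrow> pt set" where
  "sector u v w = {u + s *\<^sub>R (v - u) + t *\<^sub>R (w - u) | s t. s \<ge> 0 \<and> t \<ge> 0}"

text \<open>v and w (seen from u inside a common cone) lie in different subcones:
  an obstacle having u as a corner lies angularly between them at u, i.e. the
  angular sector between rays uv and uw meets the obstacle's interior
  arbitrarily close to u.\<close>
definition separated :: "pt list set \<Rightarrow> pt \<Rightarrow> pt \<Rightarrow> pt \<Rightarrow> bool" where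
  "separated S u v w \<longleftrightarrow>
     (\<exists>P\<in>S. \<forall>e>0. sector u v w \<inter> ball u e \<inter> poly_interior P \<noteq> {})"

definition half_theta_choice :: "pt set \<Rightarrow> pt list set \<Rightarrow> pt \<Rightarrow> pt \<Rightarrow> bool" where
  "half_theta_choice V S u v \<longleftrightarrow> u \<in> V \<and> v \<in> V \<and>
     (\<exists>i<3. in_pcone u i v \<and> visible S u v \<and>
        (\<forall>w\<in>V. in_pcone u i w \<longrightarrow> visible S u w \<longrightarrow> \<not> separated S u v w \<longrightarrow>
            proj u i v \<le> proj u i w))"

definition G_inf_edge :: "pt set \<Rightarrow> pt list set \<Rightarrow> pt \<Rightarrow> pt \<Rightarrow> bool" where
  "G_inf_edge V S a b \<longleftrightarrow> half_theta_choice V S a b \<or> half_theta_choice V S b a"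

definition plane_graph :: "(pt \<Rightarrow> pt \<Rightarrow> bool) \<Rightarrow> bool" where
  "plane_graph E \<longleftrightarrow> (\<forall>a b c d. E a b \<longrightarrow> E c d \<longrightarrow> {a, b} \<noteq> {c, d} \<longrightarrow>
      open_segment a b \<inter> open_segment c d = {})"

definition obstacle_setting :: "pt set \<Rightarrow> pt list set \<Rightarrow> bool" where
  "obstacle_setting V S \<longleftrightarrow> finite V \<and> finite S \<and>
     (\<forall>P\<in>S. simple_polygon P \<and> set P \<subseteq> V) \<and>
     (\<forall>P\<in>S. \<forall>Q\<in>S. P \<noteq> Q \<longrightarrow>
        set P \<inter> set Q = {} \<and>
        (poly_boundary P \<union> poly_interior P) \<inter> (poly_boundary Q \<union> poly_interior Q) = {})"

definition general_position :: "pt set \<Rightarrow> bool" where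
  "general_position V \<longleftrightarrow>
     (\<forall>a\<in>V. \<forall>b\<in>V. \<forall>c\<in>V. a \<noteq> b \<and> a \<noteq> c \<and> b \<noteq> c \<longrightarrow> \<not> collinear {a, b, c}) \<and>
     (\<forall>a\<in>V. \<forall>b\<in>V. a \<noteq> b \<longrightarrow>
        (\<forall>k::nat<3. \<forall>c::real. b - a \<noteq> c *\<^sub>R dir (real k * pi / 3)))"

end

theory Submission
  imports Defs
begin

fun chain :: "pt list \<Rightarrow> nat \<Rightarrow> real \<Rightarrow> pt" where
  "chain P 0 = linepath (P!0) (P!1)"
| "chain P (Suc k) = chain P k +++ linepath (P!Suc k) (P!Suc (Suc k))"

lemma sp_edges:
  assumes "simple_polygon P" "i < length P" "j < length P" "i \<noteq> j"
  shows "poly_edge P i \<inter> poly_edge P j \<subseteq> {P!i, P!j}"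
proof -
  have "(if j = (i + 1) mod length P then poly_edge P i \<inter> poly_edge P j = {P ! j}
         else if i = (j + 1) mod length P then poly_edge P i \<inter> poly_edge P j = {P ! i}
         else poly_edge P i \<inter> poly_edge P j = {})"
    using assms unfolding simple_polygon_def by blast
  then show ?thesis by (auto split: if_splits)
qed

lemma sp_edges2:
  assumes "simple_polygon P" "i < length P" "j < length P" "i \<noteq> j"
    "j \<noteq> (i+1) mod length P" "i \<noteq> (j+1) mod length P"
  shows "poly_edge P i \<inter> poly_edge P j = {}"
  using assms unfolding simple_polygon_def by metis

lemma sp_edges3:
  assumes "simple_polygon P" "i < length P" "j < length P" "i \<noteq> j"
    "j = (i+1) mod length P"
  shows "poly_edge P i \<inter> poly_edge P j = {P!j}"
  using assms unfolding simple_polygon_def by metis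

lemma sp_distinct:
  assumes "simple_polygon P" "i < length P" "j < length P" "i \<noteq> j"
  shows "P!i \<noteq> P!j"
  using assms unfolding simple_polygon_def by (simp add: nth_eq_iff_index_eq)

lemma chain_props:
  assumes sp: "simple_polygon P" 
  shows "k + 2 \<le> length P \<Longrightarrow> arc (chain P k) \<and> pathstart (chain P k) = P!0 \<and>
     pathfinish (chain P k) = P!(Suc k) \<and> path_image (chain P k) = (\<Union>m\<le>k. poly_edge P m)"
proof (induction k)
  case 0
  have "0 < length P" "1 < length P" using 0 by auto
  then have "P!0 \<noteq> P!1" using sp_distinct[OF sp, of 0 1] by simp
  moreover have "poly_edge P 0 = closed_segment (P!0) (P!1)"
    using 0 by (simp add: poly_edge_def)
  ultimately show ?case by simp
next
  case (Suc k)
  let ?n = "length P"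
  have IH: "arc (chain P k)" "pathstart (chain P k) = P!0" "pathfinish (chain P k) = P!(Suc k)"
     "path_image (chain P k) = (\<Union>m\<le>k. poly_edge P m)" using Suc by auto
  have h: "Suc k < length P" "Suc (Suc k) < length P" "Suc k \<noteq> Suc (Suc k)" using Suc.prems by auto
  have ne: "P!Suc k \<noteq> P!Suc (Suc k)" using sp_distinct[OF sp h] .
  have pe: "poly_edge P (Suc k) = closed_segment (P!Suc k) (P!Suc (Suc k))"
    using Suc.prems by (simp add: poly_edge_def)
  have int: "path_image (chain P k) \<inter> path_image (linepath (P!Suc k) (P!Suc (Suc k))) \<subseteq> {P!Suc k}"
  proof -
    { fix m assume m: "m \<le> k"
      have "poly_edge P m \<inter> poly_edge P (Suc k) \<subseteq> {P!Suc k}"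
      proof (cases "m = k")
        case True
        have h: "m < length P" "Suc k < length P" "m \<noteq> Suc k" "Suc k = (m + 1) mod length P"
          using Suc.prems True by auto
        show ?thesis using sp_edges3[OF sp h] True by simp
      next
        case False
        have "poly_edge P m \<inter> poly_edge P (Suc k) = {}"
        proof (rule sp_edges2[OF sp])
          show "m < length P" "Suc k < length P" "m \<noteq> Suc k" using Suc.prems m by auto
          show "Suc k \<noteq> (m + 1) mod length P" using Suc.prems m False by auto
          have "Suc (Suc k) < length P" using Suc.prems by simp
          then show "m \<noteq> (Suc k + 1) mod length P" using m by simp
        qed
        then show ?thesis by simp
      qed }
    then show ?thesis using IH(4) pe by auto
  qed
  have "arc (chain P (Suc k))"
    using arc_join[OF IH(1) arc_linepath[OF ne]] IH int by simp
  moreover have "path_image (chain P (Suc k)) = (\<Union>m\<le>Suc k. poly_edge P m)"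
    using IH pe by (simp add: path_image_join atMost_Suc Un_commute)
  ultimately show ?case using IH by simp
qed

definition ploop :: "pt list \<Rightarrow> real \<Rightarrow> pt" where
  "ploop P = chain P (length P - 2) +++ linepath (P!(length P - 1)) (P!0)"

lemma ploop_props:
  assumes sp: "simple_polygon P"
  shows "simple_path (ploop P)" "pathfinish (ploop P) = pathstart (ploop P)"
    "path_image (ploop P) = poly_boundary P"
proof -
  let ?n = "length P"
  have n3: "?n \<ge> 3" using sp by (simp add: simple_polygon_def)
  have C: "arc (chain P (?n-2))" "pathstart (chain P (?n-2)) = P!0"
     "pathfinish (chain P (?n-2)) = P!(?n-1)" "path_image (chain P (?n-2)) = (\<Union>m\<le>?n-2. poly_edge P m)"
    using chain_props[OF sp, of "?n-2"] n3 by (auto simp: Suc_diff_Suc numeral_2_eq_2)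
  have "?n - 1 < ?n" "0 < ?n" "?n - 1 \<noteq> 0" using n3 by auto
  then have ne: "P!(?n-1) \<noteq> P!0" using sp_distinct[OF sp, of "?n-1" 0] by blast
  have pe: "poly_edge P (?n-1) = closed_segment (P!(?n-1)) (P!0)"
  proof -
    have "Suc (?n - 1) = ?n" using n3 by simp
    then have "Suc (?n - 1) mod ?n = 0" by simp
    then show ?thesis by (simp add: poly_edge_def)
  qed
  have int: "path_image (chain P (?n-2)) \<inter> path_image (linepath (P!(?n-1)) (P!0)) \<subseteq> {P!0, P!(?n-1)}"
  proof -
    { fix m assume m: "m \<le> ?n-2"
      have "poly_edge P m \<inter> poly_edge P (?n-1) \<subseteq> {P!0, P!(?n-1)}"
      proof (cases "m = ?n - 2")
        case True
        have e: "?n - 1 = Suc (?n-2)" "Suc (?n-2) < ?n" using n3 by auto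
        have "poly_edge P m \<inter> poly_edge P (?n-1) = {P!(?n-1)}"
        proof -
          have h: "m < ?n" "?n - 1 < ?n" "m \<noteq> ?n - 1" "?n - 1 = (m+1) mod ?n" using e True by auto
          show ?thesis using sp_edges3[OF sp h] .
        qed
        then show ?thesis by auto
      next
        case F1: False
        show ?thesis
        proof (cases "m = 0")
          case True
          have "Suc (?n - 1) = ?n" using n3 by simp
          then have "Suc (?n - 1) mod ?n = 0" by simp
          then have "poly_edge P (?n-1) \<inter> poly_edge P m = {P!m}"
          proof -
            have h: "?n - 1 < ?n" "m < ?n" "?n - 1 \<noteq> m" "m = (?n - 1 + 1) mod ?n"
              using n3 True \<open>Suc (?n - 1) mod ?n = 0\<close> by auto
            show ?thesis using sp_edges3[OF sp h] .
          qed
          then show ?thesis using True by auto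
        next
          case False
          have "Suc (?n - 1) = ?n" using n3 by simp
          then have "Suc (?n - 1) mod ?n = 0" by simp
          have "poly_edge P m \<inter> poly_edge P (?n-1) = {}"
          proof (rule sp_edges2[OF sp])
            show "m < ?n" "?n - 1 < ?n" "m \<noteq> ?n - 1" using n3 m by auto
            have "m + 1 < ?n" using m n3 by auto
            then show "?n - 1 \<noteq> (m + 1) mod ?n" using F1 by auto
            show "m \<noteq> (?n - 1 + 1) mod ?n" using False \<open>Suc (?n - 1) mod ?n = 0\<close> by simp
          qed
          then show ?thesis by simp
        qed
      qed }
    then show ?thesis using C(4) pe by auto
  qed
  show "simple_path (ploop P)" unfolding ploop_def
    apply (rule simple_path_join_loop[OF C(1) arc_linepath[OF ne]])
    using C int by auto
  show "pathfinish (ploop P) = pathstart (ploop P)" unfolding ploop_def using C by simp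
  have "(\<Union>m\<le>?n-2. poly_edge P m) \<union> poly_edge P (?n-1) = (\<Union>m<?n. poly_edge P m)"
  proof -
    have "{..<?n} = insert (?n-1) {..?n-2}" using n3 by auto
    then show ?thesis by auto
  qed
  then show "path_image (ploop P) = poly_boundary P" unfolding ploop_def poly_boundary_def
    using C pe by (simp add: path_image_join)
qed

lemma boundary_closure:
  assumes sp: "simple_polygon P"
  shows "poly_boundary P \<subseteq> closure (poly_interior P)"
proof -
  let ?S = "poly_boundary P"
  have hc: "?S homeomorphic sphere (0::complex) 1"
    using homeomorphic_simple_path_image_circle[OF ploop_props(1,2)[OF sp], of 1 0] ploop_props(3)[OF sp] by simp
  have "sphere (0::complex) 1 homeomorphic sphere (0::pt) 1"
    by (rule homeomorphic_spheres_gen) auto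
  then have hom: "?S homeomorphic sphere (0::pt) 1" using hc homeomorphic_trans by blast
  have "\<not> connected (- ?S)" using Jordan_Brouwer_separation[OF hom] by simp
  moreover have "compact ?S" using hom homeomorphic_compactness compact_sphere by blast
  moreover have "bounded (- (- ?S))" using \<open>compact ?S\<close> compact_imp_bounded by simp
  moreover have "2 \<le> DIM(pt)" by simp
  ultimately obtain C where C: "C \<in> components (- ?S)" "bounded C"
    using cobounded_has_bounded_component[of "- ?S"] by metis
  have fr: "frontier C = ?S" using Jordan_Brouwer_frontier[OF hom C(1)] by simp
  have "C \<subseteq> inside ?S"
  proof
    fix x assume x: "x \<in> C"
    from C(1) obtain y where y: "C = connected_component_set (- ?S) y" by (auto simp: components_iff)
    then have "C = connected_component_set (- ?S) x" using x connected_component_eq by blast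
    moreover have "x \<notin> ?S" using x y connected_component_subset by blast
    ultimately have "C = connected_component_set (- ?S) x" "x \<notin> ?S" by auto
    then show "x \<in> inside ?S" using C(2) by (simp add: inside_def)
  qed
  then have "closure C \<subseteq> closure (inside ?S)" by (rule closure_mono)
  then show ?thesis using fr frontier_def poly_interior_def by auto
qed

definition cross :: "pt \<Rightarrow> pt \<Rightarrow> real" where
  "cross x y = fst x * snd y - snd x * fst y"

lemma cross_aff:
  "cross d ((1-u) *\<^sub>R x + u *\<^sub>R y - c) = (1-u) * cross d (x - c) + u * cross d (y - c)"
  unfolding cross_def by (simp add: algebra_simps)

lemma cross_par:
  assumes "cross d e = 0" "d \<noteq> 0"
  shows "\<exists>u. e = u *\<^sub>R d"
proof (cases "fst d = 0")
  case True
  then have "snd d \<noteq> 0" using assms(2) by (simp add: prod_eq_iff)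
  then have "e = (snd e / snd d) *\<^sub>R d"
    using assms(1) True by (simp add: cross_def prod_eq_iff field_simps)
  then show ?thesis by blast
next
  case False
  then have "e = (fst e / fst d) *\<^sub>R d"
    using assms(1) by (simp add: cross_def prod_eq_iff field_simps)
  then show ?thesis by blast
qed

lemma cross_col:
  assumes "cross (b - a) (c - a) = 0"
  shows "collinear {a, b, c}"
proof (cases "a = b")
  case True
  then show ?thesis by (simp add: collinear_2)
next
  case False
  then obtain u where u: "c - a = u *\<^sub>R (b - a)" using cross_par[OF assms] by auto
  then have "c = u *\<^sub>R b + (1 - u) *\<^sub>R a" by (simp add: algebra_simps)
  then have "collinear {b, c, a}" using collinear_3_expand by blast
  then show ?thesis by (simp add: insert_commute)
qed

lemma gp_cross:
  assumes "general_position V" "a \<in> V" "b \<in> V" "c \<in> V" "a \<noteq> b" "a \<noteq> c" "b \<noteq> c"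
  shows "cross (b - a) (c - a) \<noteq> 0"
proof -
  have "\<forall>a\<in>V. \<forall>b\<in>V. \<forall>c\<in>V. a \<noteq> b \<and> a \<noteq> c \<and> b \<noteq> c \<longrightarrow> \<not> collinear {a, b, c}"
    using assms(1) unfolding general_position_def by (rule conjunct1)
  then have "\<not> collinear {a, b, c}" using assms(2-7) by blast
  then show ?thesis using cross_col by blast
qed

lemma open_seg_param:
  assumes "x \<in> open_segment a b"
  obtains u where "0 < u" "u < 1" "x = a + u *\<^sub>R (b - a)" "a \<noteq> b"
  using assms unfolding in_segment by (auto simp: algebra_simps)

lemma closed_seg_param:
  assumes "x \<in> closed_segment a b"
  obtains u where "0 \<le> u" "u \<le> 1" "x = a + u *\<^sub>R (b - a)"
  using assms unfolding in_segment by (auto simp: algebra_simps)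

lemma gp_open_seg:
  assumes "general_position V" "a \<in> V" "b \<in> V" "v \<in> V" "v \<in> open_segment a b"
  shows False
proof -
  obtain u where u: "0 < u" "u < 1" "v = a + u *\<^sub>R (b - a)" "a \<noteq> b"
    using open_seg_param[OF assms(5)] by blast
  have "v \<noteq> a" "v \<noteq> b" using assms(5) by (auto simp: open_segment_def)
  moreover have "cross (b - a) (v - a) = 0" using u by (simp add: cross_def)
  ultimately show False using gp_cross[OF assms(1-4)] u by auto
qed

lemma inside_component:
  assumes "x \<in> inside S" "connected T" "x \<in> T" "T \<inter> S = {}"
  shows "T \<subseteq> inside S"
proof
  fix y assume y: "y \<in> T"
  have sub: "T \<subseteq> connected_component_set (- S) x"
    using connected_component_maximal[OF assms(3,2)] assms(4) by blast
  then have "connected_component_set (- S) y = connected_component_set (- S) x"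
    using y connected_component_eq by blast
  moreover have "y \<notin> S" using y assms(4) by blast
  ultimately show "y \<in> inside S" using assms(1) by (simp add: inside_def)
qed

lemma sp_edges_gen:
  assumes "simple_polygon P" "i < length P" "j < length P" "i \<noteq> j"
  shows "poly_edge P i \<inter> poly_edge P j \<subseteq> {P!i, P!((i+1) mod length P)}"
proof -
  have "(if j = (i + 1) mod length P then poly_edge P i \<inter> poly_edge P j = {P ! j}
         else if i = (j + 1) mod length P then poly_edge P i \<inter> poly_edge P j = {P ! i}
         else poly_edge P i \<inter> poly_edge P j = {})"
    using assms unfolding simple_polygon_def by blast
  then show ?thesis by (auto split: if_splits)
qed

lemma edge_in_boundary: "k < length P \<Longrightarrow> poly_edge P k \<subseteq> poly_boundary P"
  unfolding poly_boundary_def by blast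

lemma halfplane_convex: "convex {x. 0 < sg * cross d (x - c)}"
proof (rule convexI)
  fix x y :: pt and u v :: real
  assume a0: "x \<in> {x. 0 < sg * cross d (x - c)}" "y \<in> {x. 0 < sg * cross d (x - c)}" "0 \<le> u" "0 \<le> v" "u + v = 1"
  then have a: "0 < sg * cross d (x - c)" "0 < sg * cross d (y - c)" "0 \<le> u" "0 \<le> v" "u + v = 1" by auto
  have e1: "u *\<^sub>R (x - c) + v *\<^sub>R (y - c) = u *\<^sub>R x + v *\<^sub>R y - (u+v) *\<^sub>R c"
    by (simp add: algebra_simps)
  have "cross d (u *\<^sub>R x + v *\<^sub>R y - c) = cross d (u *\<^sub>R (x - c) + v *\<^sub>R (y - c))"
    using e1 a(5) by simp
  also have "\<dots> = u * cross d (x - c) + v * cross d (y - c)"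
    by (simp add: cross_def algebra_simps)
  finally have "cross d (u *\<^sub>R x + v *\<^sub>R y - c) = u * cross d (x - c) + v * cross d (y - c)" .
  then have "sg * cross d (u *\<^sub>R x + v *\<^sub>R y - c) = u * (sg * cross d (x - c)) + v * (sg * cross d (y - c))"
    by (simp add: algebra_simps)
  moreover have "u * (sg * cross d (x - c)) + v * (sg * cross d (y - c)) > 0"
  proof (cases "u = 0")
    case True then show ?thesis using a by simp
  next
    case False then have "u * (sg * cross d (x - c)) > 0" using a by simp
    moreover have "v * (sg * cross d (y - c)) \<ge> 0" using a by simp
    ultimately show ?thesis by linarith
  qed
  ultimately show "u *\<^sub>R x + v *\<^sub>R y \<in> {x. 0 < sg * cross d (x - c)}" by simp
qed

lemma crossing_inside:
  assumes sp: "simple_polygon P" and k: "k < length P"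
    and r1: "r \<in> open_segment (P!k) (P!((k+1) mod length P))"
    and r2: "r \<in> closed_segment s1 s2"
    and n1: "cross (P!((k+1) mod length P) - P!k) (s1 - P!k) \<noteq> 0"
    and n2: "cross (P!((k+1) mod length P) - P!k) (s2 - P!k) \<noteq> 0"
  shows "closed_segment s1 s2 \<inter> poly_interior P \<noteq> {}"
proof -
  define n where "n = length P"
  define c1 where "c1 = P!k"
  define c2 where "c2 = P!((k+1) mod n)"
  define L where "L x = cross (c2 - c1) (x - c1)" for x
  have n3: "n \<ge> 3" using sp by (simp add: simple_polygon_def n_def)
  obtain t0 where t0: "0 < t0" "t0 < 1" "r = c1 + t0 *\<^sub>R (c2 - c1)" "c1 \<noteq> c2"
    using open_seg_param[OF r1] unfolding c1_def c2_def n_def by blast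
  have rne: "r \<noteq> c1" "r \<noteq> c2" using r1 unfolding c1_def c2_def n_def open_segment_def by auto
  define U where "U = (\<Union>j\<in>{j. j < n \<and> j \<noteq> k}. poly_edge P j)"
  have "closed U" unfolding U_def poly_edge_def by (intro closed_UN) auto
  have rU: "r \<notin> U"
  proof
    assume "r \<in> U"
    then obtain j where j: "j < n" "j \<noteq> k" "r \<in> poly_edge P j" unfolding U_def by auto
    have "r \<in> poly_edge P k" using r1 unfolding poly_edge_def open_segment_def by auto
    then show False using sp_edges_gen[OF sp k, of j] j rne unfolding c1_def c2_def n_def by auto
  qed
  obtain e1 where e1: "e1 > 0" "ball r e1 \<subseteq> - U"
    using \<open>closed U\<close> rU open_contains_ball[of "- U"] by (auto simp: closed_def)
  define e where "e = min e1 (min (dist r c1) (dist r c2))"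
  have e0: "e > 0" using e1 rne by (simp add: e_def)
  have bdU: "poly_boundary P = U \<union> poly_edge P k"
    unfolding poly_boundary_def U_def n_def using k by auto
  have "r \<in> poly_boundary P" using r1 edge_in_boundary[OF k] unfolding poly_edge_def open_segment_def by auto
  then have "r \<in> closure (poly_interior P)" using boundary_closure[OF sp] by auto
  then obtain q where q: "q \<in> poly_interior P" "dist q r < e"
    using closure_approachable e0 by blast
  have qnb: "q \<notin> poly_boundary P" using q(1) unfolding poly_interior_def inside_def by auto
  have Lq: "L q \<noteq> 0"
  proof
    assume "L q = 0"
    then obtain tau where tau: "q - c1 = tau *\<^sub>R (c2 - c1)" using cross_par[of "c2 - c1" "q - c1"] t0(4)
      unfolding L_def by auto
    have nz: "norm (c2 - c1) > 0" using t0(4) by simp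
    have "q - r = (q - c1) - (r - c1)" by simp
    also have "\<dots> = tau *\<^sub>R (c2 - c1) - t0 *\<^sub>R (c2 - c1)" using tau t0(3) by simp
    also have "\<dots> = (tau - t0) *\<^sub>R (c2 - c1)" by (simp add: scaleR_diff_left)
    finally have "q - r = (tau - t0) *\<^sub>R (c2 - c1)" .
    then have dqr: "dist q r = \<bar>tau - t0\<bar> * norm (c2 - c1)" by (simp add: dist_norm)
    have "dist r c1 = t0 * norm (c2 - c1)" using t0 by (simp add: dist_norm)
    moreover have "r - c2 = (t0 - 1) *\<^sub>R (c2 - c1)" using t0(3) by (simp add: algebra_simps)
    then have "dist r c2 = (1 - t0) * norm (c2 - c1)" using t0 by (simp add: dist_norm)
    ultimately have "\<bar>tau - t0\<bar> * norm (c2 - c1) < t0 * norm (c2 - c1)"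
       "\<bar>tau - t0\<bar> * norm (c2 - c1) < (1 - t0) * norm (c2 - c1)"
      using q(2) dqr unfolding e_def by auto
    then have "\<bar>tau - t0\<bar> < t0" "\<bar>tau - t0\<bar> < 1 - t0" using nz by auto
    then have "0 \<le> tau" "tau \<le> 1" by auto
    then have "q \<in> closed_segment c1 c2" unfolding in_segment
      using tau by (intro exI[of _ tau]) (auto simp: algebra_simps)
    then have "q \<in> poly_boundary P" using edge_in_boundary[OF k]
      unfolding poly_edge_def c1_def c2_def n_def by auto
    then show False using qnb by simp
  qed
  define sg where "sg = sgn (L q)"
  define H where "H = ball r e \<inter> {x. 0 < sg * cross (c2 - c1) (x - c1)}"
  have "convex H" unfolding H_def by (intro convex_Int convex_ball halfplane_convex)
  then have "connected H" by (rule convex_connected)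
  have qH: "q \<in> H" unfolding H_def sg_def using q(2) Lq
    by (auto simp: dist_commute L_def sgn_real_def)
  have "H \<inter> poly_boundary P = {}"
  proof -
    have "H \<inter> U = {}" using e1(2) unfolding H_def e_def by auto
    moreover have "H \<inter> poly_edge P k = {}"
    proof -
      { fix x assume "x \<in> poly_edge P k"
        then obtain u where "x = c1 + u *\<^sub>R (c2 - c1)"
          using closed_seg_param unfolding poly_edge_def c1_def c2_def n_def by metis
        then have "cross (c2 - c1) (x - c1) = 0" by (simp add: cross_def)
        then have "x \<notin> H" unfolding H_def by auto }
      then show ?thesis by blast
    qed
    ultimately show ?thesis using bdU by auto
  qed
  then have Hin: "H \<subseteq> poly_interior P"
    using inside_component[OF q(1)[unfolded poly_interior_def] \<open>connected H\<close> qH]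
    unfolding poly_interior_def by auto
  obtain u where u: "0 \<le> u" "u \<le> 1" "r = (1 - u) *\<^sub>R s1 + u *\<^sub>R s2" using r2 unfolding in_segment by auto
  have Lr: "L r = 0" using t0(3) by (simp add: L_def cross_def)
  have "L r = (1-u) * L s1 + u * L s2" unfolding L_def using u(3) cross_aff by simp
  then have Lsum: "(1-u) * L s1 + u * L s2 = 0" using Lr by simp
  have sgv: "sg = 1 \<or> sg = -1" unfolding sg_def using Lq by (auto simp: sgn_real_def)
  obtain s where s: "s \<in> {s1, s2}" "sg * L s > 0"
  proof -
    have Ls: "L s1 \<noteq> 0" "L s2 \<noteq> 0" using n1 n2 unfolding L_def c1_def c2_def n_def by auto
    have "sg * L s1 > 0 \<or> sg * L s2 > 0"
    proof (rule ccontr)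
      assume "\<not> ?thesis"
      then have A: "sg * L s1 < 0" "sg * L s2 < 0" using Ls sgv by auto
      have "sg * ((1-u) * L s1 + u * L s2) = (1-u) * (sg * L s1) + u * (sg * L s2)" by (simp add: algebra_simps)
      moreover have "(1-u) * (sg * L s1) + u * (sg * L s2) < 0"
      proof (cases "u = 1")
        case True then show ?thesis using A by simp
      next
        case False
        then have "(1-u) * (sg * L s1) < 0" using A u by (simp add: mult_pos_neg)
        moreover have "u * (sg * L s2) \<le> 0" using A u by (simp add: mult_nonneg_nonpos)
        ultimately show ?thesis by linarith
      qed
      ultimately show False using Lsum by simp
    qed
    then show thesis using that by blast
  qed
  define del where "del = min 1 (e / (2 * (norm (s - r) + 1)))"
  have den: "2 * (norm (s - r) + 1) > 0"
    by (metis add_nonneg_pos mult_pos_pos zero_less_numeral zero_less_one norm_ge_zero)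
  then have "e / (2 * (norm (s - r) + 1)) > 0" using e0 by (simp add: divide_pos_pos)
  then have del0: "0 < del" "del \<le> 1" unfolding del_def by auto
  define y where "y = (1 - del) *\<^sub>R r + del *\<^sub>R s"
  have "y - r = del *\<^sub>R (s - r)" unfolding y_def by (simp add: algebra_simps)
  then have "dist y r = del * norm (s - r)" using del0 by (simp add: dist_norm)
  also have "\<dots> \<le> (e / (2 * (norm (s - r) + 1))) * norm (s - r)"
    unfolding del_def by (intro mult_right_mono) auto
  also have "\<dots> < e"
  proof -
    have "(e / (2 * (norm (s - r) + 1))) * norm (s - r) = e * (norm (s - r) / (2 * (norm (s - r) + 1)))"
      by simp
    moreover have "norm (s - r) / (2 * (norm (s - r) + 1)) < 1"
    proof -
      have "norm (s - r) < 2 * (norm (s - r) + 1)" by (smt (verit) norm_ge_zero)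
      then show ?thesis using den by (simp add: divide_less_eq_1_pos)
    qed
    ultimately show ?thesis using e0 by (metis mult.right_neutral mult_strict_left_mono)
  qed
  finally have yb: "y \<in> ball r e" by (simp add: dist_commute)
  have "L y = (1 - del) * L r + del * L s" unfolding L_def y_def using cross_aff by simp
  then have "sg * L y = del * (sg * L s)" using Lr by (simp add: algebra_simps)
  then have "sg * L y > 0" using s(2) del0 by (metis mult_pos_pos)
  then have "y \<in> H" using yb unfolding H_def L_def by simp
  moreover have "y \<in> closed_segment s1 s2"
  proof -
    have "s \<in> closed_segment s1 s2" using s(1) by auto
    then have "closed_segment r s \<subseteq> closed_segment s1 s2"
      using r2 by (simp add: subset_closed_segment)
    moreover have "y \<in> closed_segment r s" unfolding in_segment y_def using del0
      by (intro exI[of _ del]) auto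
    ultimately show ?thesis by auto
  qed
  ultimately show ?thesis using Hin by blast
qed

definition G :: "nat \<Rightarrow> pt \<Rightarrow> real" where
  "G k q = dotp q (dir (bisector k))"

lemma dir0: "dir (bisector 0) = (0, 1)"
  by (simp add: dir_def bisector_def)

lemma dir1: "dir (bisector 1) = (- sqrt 3 / 2, - 1 / 2)"
proof -
  have b: "bisector 1 = pi/6 + pi" unfolding bisector_def by (simp add: field_simps)
  show ?thesis unfolding dir_def b cos_periodic_pi sin_periodic_pi cos_30 sin_30 by simp
qed

lemma dir2: "dir (bisector 2) = (sqrt 3 / 2, - 1 / 2)"
proof -
  have b: "bisector 2 = - (pi/6) + 2 * pi" unfolding bisector_def by (simp add: field_simps)
  show ?thesis unfolding dir_def b cos_periodic sin_periodic cos_minus sin_minus cos_30 sin_30 by simp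
qed

lemma G0: "G 0 q = snd q" by (simp add: G_def dir0 dotp_def)
lemma G1: "G 1 q = - sqrt 3 / 2 * fst q - snd q / 2" unfolding G_def dir1 dotp_def by simp
lemma G2: "G 2 q = sqrt 3 / 2 * fst q - snd q / 2" unfolding G_def dir2 dotp_def by simp

lemma G_add: "G k (x + y) = G k x + G k y" by (simp add: G_def dotp_def algebra_simps)
lemma G_diff: "G k (x - y) = G k x - G k y" by (simp add: G_def dotp_def algebra_simps)
lemma G_scale: "G k (c *\<^sub>R x) = c * G k x" by (simp add: G_def dotp_def algebra_simps)

lemma proj_G: "proj u i v = G i v - G i u"
  by (simp add: proj_def G_def[symmetric] G_diff)

lemma s3: "sqrt 3 * sqrt 3 = (3::real)" by simp

lemma sqrt_le_iff2:
  fixes c Y :: real assumes "0 \<le> c"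
  shows "sqrt c \<le> Y \<longleftrightarrow> 0 \<le> Y \<and> c \<le> Y^2"
proof (cases "0 \<le> Y")
  case True
  have "sqrt (Y^2) = Y" using True by simp
  then have "sqrt c \<le> Y \<longleftrightarrow> sqrt c \<le> sqrt (Y^2)" by simp
  also have "\<dots> \<longleftrightarrow> c \<le> Y^2" by (rule real_sqrt_le_iff)
  finally show ?thesis using True by simp
next
  case False
  have "sqrt c \<ge> 0" using assms by simp
  then have "\<not> sqrt c \<le> Y" using False by linarith
  then show ?thesis using False by simp
qed

lemma cone_alg:
  fixes X Y :: real
  shows "(sqrt 3 / 2 * sqrt (X^2 + Y^2) \<le> Y) \<longleftrightarrow> (- Y/2 - sqrt 3 / 2 * X \<le> 0 \<and> - Y/2 + sqrt 3 / 2 * X \<le> 0)"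
proof -
  have s4: "sqrt 4 = (2::real)"
  proof -
    have "(4::real) = 2^2" by simp
    then show ?thesis by simp
  qed
  have e1: "sqrt 3 / 2 * sqrt (X^2 + Y^2) = sqrt (3/4 * (X^2 + Y^2))"
    unfolding real_sqrt_mult real_sqrt_divide s4 by simp
  have L: "(sqrt 3 / 2 * sqrt (X^2 + Y^2) \<le> Y) \<longleftrightarrow> 0 \<le> Y \<and> 3/4 * (X^2 + Y^2) \<le> Y^2"
    unfolding e1 by (rule sqrt_le_iff2) simp
  have e2: "sqrt 3 * \<bar>X\<bar> = sqrt (3 * X^2)" by (simp add: real_sqrt_mult)
  have R: "(sqrt 3 * \<bar>X\<bar> \<le> Y) \<longleftrightarrow> 0 \<le> Y \<and> 3 * X^2 \<le> Y^2"
    unfolding e2 by (rule sqrt_le_iff2) simp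
  have "(- Y/2 - sqrt 3 / 2 * X \<le> 0 \<and> - Y/2 + sqrt 3 / 2 * X \<le> 0) \<longleftrightarrow> sqrt 3 * \<bar>X\<bar> \<le> Y"
  proof -
    define a where "a = sqrt 3 * X"
    have h1: "sqrt 3 / 2 * X = a / 2" unfolding a_def by simp
    have h2: "sqrt 3 * \<bar>X\<bar> = \<bar>a\<bar>" unfolding a_def by (simp add: abs_mult)
    show ?thesis unfolding h1 h2 abs_le_iff by linarith
  qed
  moreover have "3/4 * (X^2 + Y^2) \<le> Y^2 \<longleftrightarrow> 3 * X^2 \<le> Y^2" by auto
  ultimately show ?thesis using L R by simp
qed


lemma norm_pt: "norm (d::pt) = sqrt ((fst d)^2 + (snd d)^2)"
  by (simp add: norm_prod_def)

lemma s3sq: "(sqrt 3)^2 = (3::real)" by simp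

lemma rot1: "(fst d / 2 - sqrt 3 / 2 * snd d)^2 + (- sqrt 3 / 2 * fst d - snd d / 2)^2 = (fst d)^2 + (snd d)^2"
proof -
  have "(fst d / 2 - sqrt 3 / 2 * snd d)^2 + (- sqrt 3 / 2 * fst d - snd d / 2)^2
     = (1 + (sqrt 3)^2) / 4 * ((fst d)^2 + (snd d)^2)" by (simp add: power2_eq_square algebra_simps)
  then show ?thesis by simp
qed

lemma rot2: "(fst d / 2 + sqrt 3 / 2 * snd d)^2 + (sqrt 3 / 2 * fst d - snd d / 2)^2 = (fst d)^2 + (snd d)^2"
proof -
  have "(fst d / 2 + sqrt 3 / 2 * snd d)^2 + (sqrt 3 / 2 * fst d - snd d / 2)^2
     = (1 + (sqrt 3)^2) / 4 * ((fst d)^2 + (snd d)^2)" by (simp add: power2_eq_square algebra_simps)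
  then show ?thesis by simp
qed

lemma in_pcone_iff:
  assumes "i < 3"
  shows "in_pcone u i v \<longleftrightarrow> v \<noteq> u \<and> G ((i+1) mod 3) v \<le> G ((i+1) mod 3) u \<and> G ((i+2) mod 3) v \<le> G ((i+2) mod 3) u"
proof -
  define d where "d = v - u"
  have dist: "dist v u = sqrt ((fst d)^2 + (snd d)^2)" unfolding d_def dist_norm norm_pt by simp
  have pc: "in_pcone u i v \<longleftrightarrow> v \<noteq> u \<and> sqrt 3 / 2 * sqrt ((fst d)^2 + (snd d)^2) \<le> G i d"
    unfolding in_pcone_def proj_def G_def[symmetric] d_def[symmetric] dist cos_30 by simp
  have gk: "G k v \<le> G k u \<longleftrightarrow> G k d \<le> 0" for k unfolding d_def G_diff by simp
  have ss: "sqrt 3 * sqrt 3 = (3::real)" by simp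
  consider "i = 0" | "i = 1" | "i = 2" using assms by linarith
  then show ?thesis
  proof cases
    case 1
    have "sqrt 3 / 2 * sqrt ((fst d)^2 + (snd d)^2) \<le> G i d \<longleftrightarrow> G 1 d \<le> 0 \<and> G 2 d \<le> 0"
      using cone_alg[of "fst d" "snd d"] unfolding 1 G0 G1 G2 by (simp add: algebra_simps) arith
    then show ?thesis unfolding pc gk using 1 by (simp add: numeral_2_eq_2)
  next
    case 2
    have "sqrt 3 / 2 * sqrt ((fst d)^2 + (snd d)^2) \<le> G i d \<longleftrightarrow> G 2 d \<le> 0 \<and> G 0 d \<le> 0"
    proof -
      have A: "- G 1 d / 2 - sqrt 3 / 2 * (fst d / 2 - sqrt 3 / 2 * snd d) = G 0 d"
        unfolding G0 G1 by (simp add: algebra_simps ss; simp add: field_simps)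
      have B: "- G 1 d / 2 + sqrt 3 / 2 * (fst d / 2 - sqrt 3 / 2 * snd d) = G 2 d"
        unfolding G2 G1 by (simp add: algebra_simps ss; simp add: field_simps)
      show ?thesis using cone_alg[of "fst d / 2 - sqrt 3 / 2 * snd d" "G 1 d"] unfolding 2 A B
        unfolding G1 rot1 by auto
    qed
    then show ?thesis unfolding pc gk using 2 by (simp add: numeral_2_eq_2)
  next
    case 3
    have "sqrt 3 / 2 * sqrt ((fst d)^2 + (snd d)^2) \<le> G i d \<longleftrightarrow> G 1 d \<le> 0 \<and> G 0 d \<le> 0"
    proof -
      have A: "- G 2 d / 2 - sqrt 3 / 2 * (fst d / 2 + sqrt 3 / 2 * snd d) = G 1 d"
        unfolding G2 G1 by (simp add: algebra_simps ss; simp add: field_simps)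
      have B: "- G 2 d / 2 + sqrt 3 / 2 * (fst d / 2 + sqrt 3 / 2 * snd d) = G 0 d"
        unfolding G0 G2 by (simp add: algebra_simps ss; simp add: field_simps)
      show ?thesis using cone_alg[of "fst d / 2 + sqrt 3 / 2 * snd d" "G 2 d"] unfolding 3 A B
        unfolding G2 rot2 by auto
    qed
    then show ?thesis unfolding pc gk using 3 by (auto simp add: numeral_2_eq_2)
  qed
qed

lemma in_pcone_pos:
  assumes "in_pcone u i v" shows "G i v > G i u"
proof -
  have "v \<noteq> u" using assms by (simp add: in_pcone_def)
  then have "dist v u > 0" by simp
  moreover have "cos (pi/6) > 0" by (simp add: cos_30)
  ultimately have "cos (pi/6) * dist v u > 0" by simp
  then show ?thesis using assms unfolding in_pcone_def proj_G by linarith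
qed

definition M :: "pt \<Rightarrow> pt \<Rightarrow> pt set" where
  "M a b = {q. \<forall>k<3. G k q \<le> max (G k a) (G k b)}"

lemma M_cone:
  assumes "i < 3" "in_pcone a i b" "q \<in> M a b" "q \<noteq> a"
  shows "in_pcone a i q"
proof -
  have b: "G ((i+1) mod 3) b \<le> G ((i+1) mod 3) a" "G ((i+2) mod 3) b \<le> G ((i+2) mod 3) a"
    using assms(2) in_pcone_iff[OF assms(1)] by auto
  have "G ((i+1) mod 3) q \<le> max (G ((i+1) mod 3) a) (G ((i+1) mod 3) b)"
       "G ((i+2) mod 3) q \<le> max (G ((i+2) mod 3) a) (G ((i+2) mod 3) b)"
    using assms(3) unfolding M_def by auto
  then have "G ((i+1) mod 3) q \<le> G ((i+1) mod 3) a" "G ((i+2) mod 3) q \<le> G ((i+2) mod 3) a"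
    using b by auto
  then show ?thesis using in_pcone_iff[OF assms(1)] assms(4) by auto
qed

lemma M_top:
  assumes "i < 3" "in_pcone a i b" "q \<in> M a b"
  shows "G i q \<le> G i b"
  using assms in_pcone_pos[OF assms(2)] unfolding M_def by fastforce

lemma gp_dir:
  assumes "general_position V" "a \<in> V" "b \<in> V" "a \<noteq> b" "k < 3"
  shows "b - a \<noteq> c *\<^sub>R dir (real k * pi / 3)"
proof -
  have "\<forall>a\<in>V. \<forall>b\<in>V. a \<noteq> b \<longrightarrow> (\<forall>k::nat<3. \<forall>c::real. b - a \<noteq> c *\<^sub>R dir (real k * pi / 3))"
    using assms(1) unfolding general_position_def by (rule conjunct2)
  then show ?thesis using assms(2-5) by blast
qed

lemma gp_tie:
  assumes gp: "general_position V" and "w \<in> V" "b \<in> V" "w \<noteq> b" "i < 3"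
  shows "G i w \<noteq> G i b"
proof
  assume eq: "G i w = G i b"
  define d where "d = w - b"
  have Gd: "G i d = 0" unfolding d_def G_diff using eq by simp
  have s2: "sin (2 * pi / 3) = sqrt 3 / 2" using sin_120' by (simp add: mult.commute)
  have c2: "cos (2 * pi / 3) = - 1 / 2" using cos_120 by simp
  consider "i = 0" | "i = 1" | "i = 2" using assms(5) by linarith
  then show False
  proof cases
    case 1
    then have "snd d = 0" using Gd G0 by simp
    then have "d = fst d *\<^sub>R dir (real 0 * pi / 3)" by (simp add: dir_def prod_eq_iff)
    then have "w - b = fst d *\<^sub>R dir (real 0 * pi / 3)" unfolding d_def .
    moreover have "(0::nat) < 3" by simp
    ultimately show False using gp_dir[OF gp assms(3,2) assms(4)[symmetric], of 0 "fst d"] by blast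
  next
    case 2
    then have e: "G i d = - sqrt 3 / 2 * fst d - snd d / 2" using G1 by simp
    then have "snd d / 2 = - sqrt 3 / 2 * fst d" using Gd by linarith
    then have "snd d = - sqrt 3 * fst d" by (simp add: field_simps)
    then have "d = (- 2 * fst d) *\<^sub>R dir (real 2 * pi / 3)"
      by (simp add: dir_def prod_eq_iff s2 c2)
    then have "w - b = (- 2 * fst d) *\<^sub>R dir (real 2 * pi / 3)" unfolding d_def .
    moreover have "(2::nat) < 3" by simp
    ultimately show False using gp_dir[OF gp assms(3,2) assms(4)[symmetric], of 2 "- 2 * fst d"] by blast
  next
    case 3
    then have e: "G i d = sqrt 3 / 2 * fst d - snd d / 2" using G2 by simp
    then have "snd d / 2 = sqrt 3 / 2 * fst d" using Gd by linarith
    then have "snd d = sqrt 3 * fst d" by (simp add: field_simps)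
    then have "d = (2 * fst d) *\<^sub>R dir (real 1 * pi / 3)"
      by (simp add: dir_def prod_eq_iff sin_60 cos_60)
    then have "w - b = (2 * fst d) *\<^sub>R dir (real 1 * pi / 3)" unfolding d_def .
    moreover have "(1::nat) < 3" by simp
    ultimately show False using gp_dir[OF gp assms(3,2) assms(4)[symmetric], of 1 "2 * fst d"] by blast
  qed
qed

lemma G_seg:
  assumes "x \<in> closed_segment a b"
  obtains u where "0 \<le> u" "u \<le> 1" "G k x = (1 - u) * G k a + u * G k b"
proof -
  obtain u where u: "0 \<le> u" "u \<le> 1" "x = (1 - u) *\<^sub>R a + u *\<^sub>R b" using assms unfolding in_segment by auto
  then have "G k x = (1 - u) * G k a + u * G k b" by (simp add: G_add G_scale)
  then show thesis using that u by blast
qed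

lemma conv_le: "0 \<le> u \<Longrightarrow> u \<le> 1 \<Longrightarrow> (1 - u) * A + u * B \<le> max A (B::real)"
proof -
  assume u: "0 \<le> u" "u \<le> 1"
  have "(1 - u) * A \<le> (1 - u) * max A B" using u by (intro mult_left_mono) auto
  moreover have "u * B \<le> u * max A B" using u by (intro mult_left_mono) auto
  ultimately have "(1 - u) * A + u * B \<le> (1 - u) * max A B + u * max A B" by linarith
  then show ?thesis by (simp add: algebra_simps)
qed

lemma conv_gt: "0 \<le> u \<Longrightarrow> u \<le> 1 \<Longrightarrow> A > m \<Longrightarrow> B > m \<Longrightarrow> (1 - u) * A + u * B > (m::real)"
proof -
  assume u: "0 \<le> u" "u \<le> 1" and ab: "A > m" "B > m"
  show ?thesis
  proof (cases "u = 0")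
    case True then show ?thesis using ab by simp
  next
    case False
    then have "u * B > u * m" using u ab by simp
    moreover have "(1 - u) * A \<ge> (1 - u) * m" using u ab by (intro mult_left_mono) auto
    ultimately have "(1 - u) * A + u * B > (1 - u) * m + u * m" by linarith
    then show ?thesis by (simp add: algebra_simps)
  qed
qed

lemma pigeon:
  assumes "p \<in> closed_segment a b" "p \<in> closed_segment c d"
  shows "c \<in> M a b \<or> d \<in> M a b \<or> a \<in> M c d \<or> b \<in> M c d"
proof (rule ccontr)
  assume "\<not> ?thesis"
  then obtain k1 k2 k3 k4 where k: "k1 < 3" "k2 < 3" "k3 < 3" "k4 < 3"
    and v1: "G k1 c > max (G k1 a) (G k1 b)" and v2: "G k2 d > max (G k2 a) (G k2 b)"
    and v3: "G k3 a > max (G k3 c) (G k3 d)" and v4: "G k4 b > max (G k4 c) (G k4 d)"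
    unfolding M_def by (auto simp: not_le)
  have pab: "G k p \<le> max (G k a) (G k b)" for k
    using G_seg[OF assms(1), of k] conv_le by metis
  have pcd: "G k p \<le> max (G k c) (G k d)" for k
    using G_seg[OF assms(2), of k] conv_le by metis
  have "k1 \<noteq> k2"
  proof
    assume "k1 = k2"
    then have "G k1 p > max (G k1 a) (G k1 b)" using G_seg[OF assms(2), of k1] conv_gt v1 v2 by metis
    then show False using pab[of k1] leD by blast
  qed
  moreover have "k3 \<noteq> k4"
  proof
    assume "k3 = k4"
    then have "G k3 p > max (G k3 c) (G k3 d)" using G_seg[OF assms(1), of k3] conv_gt v3 v4 by metis
    then show False using pcd[of k3] leD by blast
  qed
  moreover have "k1 \<noteq> k3" using v1 v3 by (metis max.strict_boundedE order.asym)
  moreover have "k1 \<noteq> k4" using v1 v4 by (metis max.strict_boundedE order.asym)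
  moreover have "k2 \<noteq> k3" using v2 v3 by (metis max.strict_boundedE order.asym)
  moreover have "k2 \<noteq> k4" using v2 v4 by (metis max.strict_boundedE order.asym)
  ultimately show False using k by linarith
qed

lemma cross_self_scale: "cross x (c *\<^sub>R x) = 0"
  by (simp add: cross_def algebra_simps)

lemma share_cross:
  assumes "y \<in> open_segment a b" "y \<in> open_segment a e"
  shows "cross (e - a) (b - a) = 0"
proof -
  obtain mu where mu: "0 < mu" "y = a + mu *\<^sub>R (b - a)" using open_seg_param[OF assms(1)] by metis
  obtain tau where tau: "y = a + tau *\<^sub>R (e - a)" using open_seg_param[OF assms(2)] by metis
  have eq: "mu *\<^sub>R (b - a) = tau *\<^sub>R (e - a)" using mu tau by simp
  have "b - a = (1/mu) *\<^sub>R (mu *\<^sub>R (b - a))" using mu(1) by simp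
  also have "\<dots> = (tau / mu) *\<^sub>R (e - a)" unfolding eq by simp
  finally have "b - a = (tau / mu) *\<^sub>R (e - a)" .
  then have "cross (e - a) (b - a) = cross (e - a) ((tau / mu) *\<^sub>R (e - a))" by simp
  also have "\<dots> = 0" by (rule cross_self_scale)
  finally show ?thesis .
qed

lemma share_gp:
  assumes gp: "general_position V" and "a \<in> V" "b \<in> V" "e \<in> V"
    and "y \<in> open_segment a b" "y \<in> open_segment a e"
  shows "b = e"
proof (rule ccontr)
  assume ne: "b \<noteq> e"
  have "a \<noteq> b" "a \<noteq> e" using assms(5,6) by (auto simp: open_segment_def)
  then have "cross (e - a) (b - a) \<noteq> 0" using gp_cross[OF gp assms(2,4,3)] ne by auto
  then show False using share_cross[OF assms(5,6)] by simp
qed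

lemma seg_offline1:
  assumes gp: "general_position V" and V: "c1 \<in> V" "c2 \<in> V" "a \<in> V" "b \<in> V"
    and y: "y \<in> open_segment c1 c2" "y \<in> open_segment a b" and ne: "{a, b} \<noteq> {c1, c2}"
  shows "cross (c2 - c1) (a - c1) \<noteq> 0"
proof
  assume z: "cross (c2 - c1) (a - c1) = 0"
  have c12: "c1 \<noteq> c2" using y(1) by (auto simp: open_segment_def)
  consider "a = c1" | "a = c2" | "a \<noteq> c1" "a \<noteq> c2" by blast
  then show False
  proof cases
    case 1
    then have "b = c2" using share_gp[OF gp V(3) V(4) V(2) y(2)] y(1) by simp
    then show False using ne 1 by simp
  next
    case 2
    have "y \<in> open_segment c2 c1" using y(1) by (simp add: open_segment_commute)
    then have "b = c1" using share_gp[OF gp V(3) V(4) V(1) y(2)] 2 by simp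
    then show False using ne 2 by auto
  next
    case 3
    then show False using gp_cross[OF gp V(1,2,3) c12] z by auto
  qed
qed

lemma seg_offline:
  assumes gp: "general_position V" and V: "c1 \<in> V" "c2 \<in> V" "a \<in> V" "b \<in> V"
    and y: "y \<in> open_segment c1 c2" "y \<in> open_segment a b" and ne: "{a, b} \<noteq> {c1, c2}"
  shows "cross (c2 - c1) (a - c1) \<noteq> 0" "cross (c2 - c1) (b - c1) \<noteq> 0"
proof -
  show "cross (c2 - c1) (a - c1) \<noteq> 0" using seg_offline1[OF assms] .
  have "y \<in> open_segment b a" using y(2) by (simp add: open_segment_commute)
  moreover have "{b, a} \<noteq> {c1, c2}" using ne by (simp add: insert_commute)
  ultimately show "cross (c2 - c1) (b - c1) \<noteq> 0" using seg_offline1[OF gp V(1,2,4,3) y(1)] by blast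
qed

lemma os_sp: "obstacle_setting V S \<Longrightarrow> P \<in> S \<Longrightarrow> simple_polygon P"
  unfolding obstacle_setting_def by blast

lemma os_V: "obstacle_setting V S \<Longrightarrow> P \<in> S \<Longrightarrow> set P \<subseteq> V"
  unfolding obstacle_setting_def by blast

lemma os_disj: "obstacle_setting V S \<Longrightarrow> P \<in> S \<Longrightarrow> Q \<in> S \<Longrightarrow> P \<noteq> Q \<Longrightarrow>
   (poly_boundary P \<union> poly_interior P) \<inter> (poly_boundary Q \<union> poly_interior Q) = {}"
  unfolding obstacle_setting_def by blast

lemma corner_boundary: "c \<in> set P \<Longrightarrow> c \<in> poly_boundary P"
proof -
  assume "c \<in> set P"
  then obtain k where k: "k < length P" "c = P!k" by (auto simp: in_set_conv_nth)
  then have "c \<in> poly_edge P k" unfolding poly_edge_def by simp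
  then show ?thesis using edge_in_boundary[OF k(1)] by auto
qed

lemma boundary_not_inside: "x \<in> poly_boundary P \<Longrightarrow> x \<notin> poly_interior P"
  unfolding poly_interior_def inside_def by auto

lemma corner_not_inside:
  assumes "obstacle_setting V S" "P \<in> S" "Q \<in> S" "c \<in> set P"
  shows "c \<notin> poly_interior Q"
proof (cases "P = Q")
  case True
  then show ?thesis using corner_boundary[OF assms(4)] boundary_not_inside by blast
next
  case False
  then show ?thesis using os_disj[OF assms(1-3) False] corner_boundary[OF assms(4)] by blast
qed

lemma visible_pt: "visible S a b \<Longrightarrow> x \<in> closed_segment a b \<Longrightarrow> P \<in> S \<Longrightarrow> x \<notin> poly_interior P"
  unfolding visible_def by blast

lemma corners_V:
  assumes "obstacle_setting V S" "P \<in> S" "k < length P"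
  shows "P!k \<in> V" "P!((k+1) mod length P) \<in> V"
proof -
  have "length P > 0" using assms(3) by linarith
  then have "(k+1) mod length P < length P" by simp
  then show "P!k \<in> V" "P!((k+1) mod length P) \<in> V" using os_V[OF assms(1,2)] assms(3) nth_mem by blast+
qed

lemma closed_boundary: "closed (poly_boundary P)"
  unfolding poly_boundary_def poly_edge_def by (intro closed_UN) auto

lemma edge_cross_vis:
  assumes os: "obstacle_setting V S" and gp: "general_position V" and P: "P \<in> S" and k: "k < length P"
    and s: "s1 \<in> V" "s2 \<in> V"
    and y1: "y \<in> open_segment (P!k) (P!((k+1) mod length P))"
    and y2: "y \<in> closed_segment s1 s2" and vis: "visible S s1 s2"
    and ne: "{s1, s2} \<noteq> {P!k, P!((k+1) mod length P)}"
  shows False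
proof -
  have c: "P!k \<in> V" "P!((k+1) mod length P) \<in> V" using corners_V[OF os P k] by auto
  have yV: "y \<notin> V" using gp_open_seg[OF gp c(1) c(2) _ y1] by blast
  have "y \<noteq> s1" "y \<noteq> s2" using yV s by auto
  then have yo: "y \<in> open_segment s1 s2" using y2 by (auto simp: open_segment_def)
  have "cross (P!((k+1) mod length P) - P!k) (s1 - P!k) \<noteq> 0"
       "cross (P!((k+1) mod length P) - P!k) (s2 - P!k) \<noteq> 0"
    using seg_offline[OF gp c s y1 yo ne] by auto
  then have "closed_segment s1 s2 \<inter> poly_interior P \<noteq> {}"
    using crossing_inside[OF os_sp[OF os P] k y1 y2] by blast
  then show False using vis P unfolding visible_def by blast
qed

lemma boundary_edge:
  assumes "x \<in> poly_boundary P"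
  obtains k where "k < length P" "x \<in> closed_segment (P!k) (P!((k+1) mod length P))"
  using assms unfolding poly_boundary_def poly_edge_def by blast

lemma p_not_boundary:
  assumes os: "obstacle_setting V S" and gp: "general_position V" and P: "P \<in> S"
    and V: "a \<in> V" "b \<in> V" "c \<in> V" "d \<in> V" and ne: "{a, b} \<noteq> {c, d}"
    and p: "p \<in> open_segment a b" "p \<in> open_segment c d"
    and vis: "visible S a b" "visible S c d"
  shows "p \<notin> poly_boundary P"
proof
  assume "p \<in> poly_boundary P"
  then obtain k where k: "k < length P" "p \<in> closed_segment (P!k) (P!((k+1) mod length P))"
    by (rule boundary_edge)
  have c: "P!k \<in> V" "P!((k+1) mod length P) \<in> V" using corners_V[OF os P k(1)] by auto
  have "p \<notin> V" using gp_open_seg[OF gp V(1,2) _ p(1)] by blast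
  then have po: "p \<in> open_segment (P!k) (P!((k+1) mod length P))"
    using k(2) c by (auto simp: open_segment_def)
  have pab: "p \<in> closed_segment a b" "p \<in> closed_segment c d" using p by (auto simp: open_segment_def)
  show False
  proof (cases "{a, b} = {P!k, P!((k+1) mod length P)}")
    case True
    then have "{c, d} \<noteq> {P!k, P!((k+1) mod length P)}" using ne by simp
    then show False using edge_cross_vis[OF os gp P k(1) V(3,4) po pab(2) vis(2)] by blast
  next
    case False
    then show False using edge_cross_vis[OF os gp P k(1) V(1,2) po pab(1) vis(1)] by blast
  qed
qed

definition lin_aff :: "(pt \<Rightarrow> real) \<Rightarrow> bool" where
  "lin_aff F \<longleftrightarrow> (\<exists>k0 k1 k2. \<forall>q. F q = k0 + k1 * fst q + k2 * snd q)"

lemma aff_line: assumes "lin_aff F" shows "F (x + t *\<^sub>R (y - x)) = F x + t * (F y - F x)"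
proof -
  obtain k0 k1 k2 where h: "\<And>q. F q = k0 + k1 * fst q + k2 * snd q" using assms unfolding lin_aff_def by blast
  show ?thesis unfolding h by (simp add: algebra_simps)
qed

lemma aff_seg: assumes "lin_aff F" shows "F ((1 - u) *\<^sub>R x + u *\<^sub>R y) = (1 - u) * F x + u * F y"
proof -
  obtain k0 k1 k2 where h: "\<And>q. F q = k0 + k1 * fst q + k2 * snd q" using assms unfolding lin_aff_def by blast
  show ?thesis unfolding h by (simp add: algebra_simps)
qed

lemma aff_comb2: assumes "lin_aff F" shows "F (a + s *\<^sub>R (x - a) + t *\<^sub>R (y - a)) = F a + s * (F x - F a) + t * (F y - F a)"
proof -
  obtain k0 k1 k2 where h: "\<And>q. F q = k0 + k1 * fst q + k2 * snd q" using assms unfolding lin_aff_def by blast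
  show ?thesis unfolding h by (simp add: algebra_simps)
qed

lemma aff_const: "lin_aff (\<lambda>q. c)"
  unfolding lin_aff_def by (intro exI[of _ c] exI[of _ 0]) simp

lemma aff_add: assumes "lin_aff F" "lin_aff H" shows "lin_aff (\<lambda>q. F q + H q)"
proof -
  obtain a0 a1 a2 where f: "\<And>q. F q = a0 + a1 * fst q + a2 * snd q" using assms(1) unfolding lin_aff_def by blast
  obtain b0 b1 b2 where h: "\<And>q. H q = b0 + b1 * fst q + b2 * snd q" using assms(2) unfolding lin_aff_def by blast
  show ?thesis unfolding lin_aff_def f h
    by (intro exI[of _ "a0 + b0"] exI[of _ "a1 + b1"] exI[of _ "a2 + b2"] allI) (simp add: algebra_simps)
qed

lemma aff_diff: assumes "lin_aff F" "lin_aff H" shows "lin_aff (\<lambda>q. F q - H q)"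
proof -
  obtain a0 a1 a2 where f: "\<And>q. F q = a0 + a1 * fst q + a2 * snd q" using assms(1) unfolding lin_aff_def by blast
  obtain b0 b1 b2 where h: "\<And>q. H q = b0 + b1 * fst q + b2 * snd q" using assms(2) unfolding lin_aff_def by blast
  show ?thesis unfolding lin_aff_def f h
    by (intro exI[of _ "a0 - b0"] exI[of _ "a1 - b1"] exI[of _ "a2 - b2"] allI) (simp add: algebra_simps)
qed

lemma aff_scale: assumes "lin_aff F" shows "lin_aff (\<lambda>q. c * F q)"
proof -
  obtain a0 a1 a2 where f: "\<And>q. F q = a0 + a1 * fst q + a2 * snd q" using assms(1) unfolding lin_aff_def by blast
  show ?thesis unfolding lin_aff_def f
    by (intro exI[of _ "c * a0"] exI[of _ "c * a1"] exI[of _ "c * a2"] allI) (simp add: algebra_simps)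
qed

lemma aff_cross1: "lin_aff (\<lambda>q. cross (q - a) v / D)"
proof -
  have "lin_aff (\<lambda>q. cross (q - a) v)" unfolding lin_aff_def cross_def
    by (intro exI[of _ "- fst a * snd v + snd a * fst v"] exI[of _ "snd v"] exI[of _ "- fst v"] allI)
       (simp add: algebra_simps)
  then have "lin_aff (\<lambda>q. (1/D) * cross (q - a) v)" by (rule aff_scale)
  then show ?thesis by simp
qed

lemma aff_cross2: "lin_aff (\<lambda>q. cross v (q - a) / D)"
proof -
  have "lin_aff (\<lambda>q. cross v (q - a))" unfolding lin_aff_def cross_def
    by (intro exI[of _ "- fst v * snd a + snd v * fst a"] exI[of _ "- snd v"] exI[of _ "fst v"] allI)
       (simp add: algebra_simps)
  then have "lin_aff (\<lambda>q. (1/D) * cross v (q - a))" by (rule aff_scale)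
  then show ?thesis by simp
qed

lemma walk:
  assumes f1: "lin_aff F1" and f2: "lin_aff F2" and f3: "lin_aff F3"
    and pos: "F1 r > 0" "F2 r > 0" "F3 r > 0" and ne: "x0 \<noteq> r"
  obtains y where "y \<in> closed_segment x0 r" "y \<noteq> r" "F1 y \<ge> 0" "F2 y \<ge> 0" "F3 y \<ge> 0"
    "y = x0 \<or> F1 y = 0 \<or> F2 y = 0 \<or> F3 y = 0"
proof -
  define g where "g t = x0 + t *\<^sub>R (r - x0)" for t
  define phi where "phi t = min (min (F1 x0 + t * (F1 r - F1 x0)) (F2 x0 + t * (F2 r - F2 x0))) (F3 x0 + t * (F3 r - F3 x0))" for t
  have phig: "phi t = min (min (F1 (g t)) (F2 (g t))) (F3 (g t))" for t
    unfolding phi_def g_def using aff_line[OF f1] aff_line[OF f2] aff_line[OF f3] by simp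
  have gseg: "g t \<in> closed_segment x0 r" if "0 \<le> t" "t \<le> 1" for t
    unfolding in_segment g_def using that by (intro exI[of _ t]) (auto simp: algebra_simps)
  have gne: "g t \<noteq> r" if "t \<noteq> 1" for t
  proof
    assume "g t = r"
    then have e: "t *\<^sub>R (r - x0) = r - x0" unfolding g_def by (metis add_diff_cancel_left')
    have "(1 - t) *\<^sub>R (r - x0) = (r - x0) - t *\<^sub>R (r - x0)" by (simp add: scaleR_diff_left)
    then have "(1 - t) *\<^sub>R (r - x0) = 0" using e by simp
    moreover have "1 - t \<noteq> 0" using that by simp
    moreover have "r - x0 \<noteq> 0" using ne by simp
    ultimately show False by simp
  qed
  show ?thesis
  proof (cases "phi 0 \<ge> 0")
    case True
    have "g 0 = x0" unfolding g_def by simp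
    then show ?thesis using that[of x0] True phig[of 0] ne by auto
  next
    case False
    have "phi 1 > 0" using phig[of 1] pos unfolding g_def by simp
    have cont: "continuous_on {0..1} phi" unfolding phi_def by (intro continuous_intros)
    obtain t where t: "0 \<le> t" "t \<le> 1" "phi t = 0"
      using IVT'[of phi 0 0 1] False \<open>phi 1 > 0\<close> cont by force
    have "t \<noteq> 1" using t \<open>phi 1 > 0\<close> by auto
    show ?thesis
    proof (rule that[of "g t"])
      show "g t \<in> closed_segment x0 r" using gseg t by simp
      show "g t \<noteq> r" using gne \<open>t \<noteq> 1\<close> by simp
      show "F1 (g t) \<ge> 0" "F2 (g t) \<ge> 0" "F3 (g t) \<ge> 0" using t(3) phig[of t] by auto
      show "g t = x0 \<or> F1 (g t) = 0 \<or> F2 (g t) = 0 \<or> F3 (g t) = 0"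
        using t(3) phig[of t] by (auto simp: min_def split: if_splits)
    qed
  qed
qed

lemma cross_bound: "\<bar>cross x y\<bar> \<le> 2 * norm x * norm y"
proof -
  have a1: "\<bar>fst x\<bar> \<le> norm x" "\<bar>snd x\<bar> \<le> norm x" "\<bar>fst y\<bar> \<le> norm y" "\<bar>snd y\<bar> \<le> norm y"
    unfolding norm_pt by auto
  have "\<bar>cross x y\<bar> \<le> \<bar>fst x\<bar> * \<bar>snd y\<bar> + \<bar>snd x\<bar> * \<bar>fst y\<bar>"
    unfolding cross_def by (metis abs_mult abs_triangle_ineq4)
  also have "\<dots> \<le> norm x * norm y + norm x * norm y"
    using a1 by (intro add_mono mult_mono) auto
  finally show ?thesis by simp
qed

locale core =
  fixes V :: "pt set" and S :: "pt list set" and a b c d w p :: pt and i :: nat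
  assumes os: "obstacle_setting V S" and gp: "general_position V"
    and V: "a \<in> V" "b \<in> V" "c \<in> V" "d \<in> V" and wcd: "w = c \<or> w = d"
    and dist: "a \<noteq> b" "c \<noteq> d" "a \<noteq> c" "a \<noteq> d" "b \<noteq> c" "b \<noteq> d"
    and i3: "i < 3" and cone: "in_pcone a i b"
    and visAB: "visible S a b" and visCD: "visible S c d"
    and pab: "p \<in> open_segment a b" and pcd: "p \<in> open_segment c d"
    and wM: "w \<in> M a b"
begin

lemma wV: "w \<in> V" using wcd V by auto
lemma wa: "w \<noteq> a" using wcd dist by auto
lemma wb: "w \<noteq> b" using wcd dist by auto

definition "D = cross (p - a) (w - a)"
definition "sg q = cross (q - a) (w - a) / D"
definition "tg q = cross (p - a) (q - a) / D"
definition "Delta = {q. sg q \<ge> 0 \<and> tg q \<ge> 0 \<and> sg q + tg q \<le> 1}"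
definition "th q = tg q / (sg q + tg q)"
definition "Cand = {v \<in> V. v \<in> Delta \<and> v \<noteq> a \<and> (\<forall>P\<in>S. v \<notin> poly_interior P)}"

lemma s0_ex: obtains s0 where "0 < s0" "s0 < 1" "p = a + s0 *\<^sub>R (b - a)"
  using open_seg_param[OF pab] by metis

lemma D_ne: "D \<noteq> 0"
proof -
  obtain s0 where s0: "0 < s0" "s0 < 1" "p = a + s0 *\<^sub>R (b - a)" by (rule s0_ex)
  have pa: "p - a = s0 *\<^sub>R (b - a)" using s0(3) by simp
  have "D = cross (s0 *\<^sub>R (b - a)) (w - a)" unfolding D_def pa ..
  also have "\<dots> = s0 * cross (b - a) (w - a)" by (simp add: cross_def algebra_simps)
  finally have "D = s0 * cross (b - a) (w - a)" .
  moreover have "cross (b - a) (w - a) \<noteq> 0" using gp_cross[OF gp V(1,2) wV dist(1) wa[symmetric] wb[symmetric]] .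
  ultimately show ?thesis using s0 by simp
qed

lemma aff_sg: "lin_aff sg" unfolding sg_def[abs_def] by (rule aff_cross1)
lemma aff_tg: "lin_aff tg" unfolding tg_def[abs_def] by (rule aff_cross2)

lemma sg_a: "sg a = 0" by (simp add: sg_def cross_def)
lemma tg_a: "tg a = 0" by (simp add: tg_def cross_def)
lemma sg_p: "sg p = 1" using D_ne by (simp add: sg_def D_def)
lemma tg_p: "tg p = 0" by (simp add: tg_def cross_def)
lemma sg_w: "sg w = 0" by (simp add: sg_def cross_def)
lemma tg_w: "tg w = 1" using D_ne by (simp add: tg_def D_def)

lemma b_param: obtains s0 where "0 < s0" "s0 < 1" "b = a + (1/s0) *\<^sub>R (p - a) + 0 *\<^sub>R (w - a)"
proof -
  obtain s0 where s0: "0 < s0" "s0 < 1" "p = a + s0 *\<^sub>R (b - a)" by (rule s0_ex)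
  have pa: "p - a = s0 *\<^sub>R (b - a)" using s0(3) by simp
  have "(1/s0) *\<^sub>R (p - a) = b - a" unfolding pa using s0(1) by simp
  then have "b = a + (1/s0) *\<^sub>R (p - a) + 0 *\<^sub>R (w - a)" by simp
  then show thesis using that s0 by blast
qed

lemma tg_b: "tg b = 0" and sg_b: "sg b > 1"
proof -
  obtain s0 where s0: "0 < s0" "s0 < 1" "b = a + (1/s0) *\<^sub>R (p - a) + 0 *\<^sub>R (w - a)" by (rule b_param)
  have "tg b = tg a + (1/s0) * (tg p - tg a) + 0 * (tg w - tg a)"
    by (subst s0(3)) (rule aff_comb2[OF aff_tg])
  then show "tg b = 0" using tg_a tg_p by simp
  have "sg b = sg a + (1/s0) * (sg p - sg a) + 0 * (sg w - sg a)"
    by (subst s0(3)) (rule aff_comb2[OF aff_sg])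
  then show "sg b > 1" using sg_a sg_p s0 by simp
qed

lemma decomp: "q = a + sg q *\<^sub>R (p - a) + tg q *\<^sub>R (w - a)"
proof -
  have D: "D = cross (p - a) (w - a)" by (simp add: D_def)
  have e1: "D * (fst q - fst a) = cross (q - a) (w - a) * (fst p - fst a) + cross (p - a) (q - a) * (fst w - fst a)"
    unfolding D cross_def by (simp add: algebra_simps)
  have e2: "D * (snd q - snd a) = cross (q - a) (w - a) * (snd p - snd a) + cross (p - a) (q - a) * (snd w - snd a)"
    unfolding D cross_def by (simp add: algebra_simps)
  have "sg q * (fst p - fst a) + tg q * (fst w - fst a) = (cross (q - a) (w - a) * (fst p - fst a) + cross (p - a) (q - a) * (fst w - fst a)) / D"
    unfolding sg_def tg_def by (simp add: add_divide_distrib)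
  also have "\<dots> = D * (fst q - fst a) / D" using e1 by simp
  also have "\<dots> = fst q - fst a" using D_ne by simp
  finally have f1: "fst q = fst a + sg q * (fst p - fst a) + tg q * (fst w - fst a)" by simp
  have "sg q * (snd p - snd a) + tg q * (snd w - snd a) = (cross (q - a) (w - a) * (snd p - snd a) + cross (p - a) (q - a) * (snd w - snd a)) / D"
    unfolding sg_def tg_def by (simp add: add_divide_distrib)
  also have "\<dots> = D * (snd q - snd a) / D" using e2 by simp
  also have "\<dots> = snd q - snd a" using D_ne by simp
  finally have f2: "snd q = snd a + sg q * (snd p - snd a) + tg q * (snd w - snd a)" by simp
  show ?thesis using f1 f2 by (simp add: prod_eq_iff)
qed

lemma G_decomp: "G k q = G k a + sg q * (G k p - G k a) + tg q * (G k w - G k a)"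
  by (subst decomp[of q]) (simp add: G_add G_diff G_scale)

lemma Delta_pos: "q \<in> Delta \<Longrightarrow> q \<noteq> a \<Longrightarrow> sg q + tg q > 0"
proof -
  assume q: "q \<in> Delta" "q \<noteq> a"
  have "sg q \<ge> 0" "tg q \<ge> 0" using q unfolding Delta_def by auto
  moreover have "\<not> (sg q = 0 \<and> tg q = 0)"
  proof
    assume "sg q = 0 \<and> tg q = 0"
    then have "q = a" using decomp[of q] by simp
    then show False using q by simp
  qed
  ultimately show ?thesis by linarith
qed

lemma comb3_le:
  fixes A B C m s t :: real
  assumes "s \<ge> 0" "t \<ge> 0" "s + t \<le> 1" "A \<le> m" "B \<le> m" "C \<le> m"
  shows "A + s * (B - A) + t * (C - A) \<le> m"
proof -
  have "A + s * (B - A) + t * (C - A) = (1 - s - t) * A + s * B + t * C" by (simp add: algebra_simps)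
  also have "\<dots> \<le> (1 - s - t) * m + s * m + t * m"
    using assms by (intro add_mono mult_left_mono) auto
  also have "\<dots> = m" by (simp add: algebra_simps)
  finally show ?thesis .
qed

lemma Delta_M: "q \<in> Delta \<Longrightarrow> q \<in> M a b"
proof -
  assume q: "q \<in> Delta"
  have pM: "G k p \<le> max (G k a) (G k b)" for k
  proof -
    have "p \<in> closed_segment a b" using pab by (auto simp: open_segment_def)
    then obtain u where "0 \<le> u" "u \<le> 1" "G k p = (1 - u) * G k a + u * G k b" by (rule G_seg)
    then show ?thesis using conv_le by simp
  qed
  { fix k :: nat assume k: "k < 3"
    have "G k w \<le> max (G k a) (G k b)" using wM k unfolding M_def by auto
    then have "G k q \<le> max (G k a) (G k b)"
      unfolding G_decomp[of k q] using q pM[of k] unfolding Delta_def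
      by (intro comb3_le) auto }
  then show ?thesis unfolding M_def by auto
qed

lemma Delta_cone: "q \<in> Delta \<Longrightarrow> q \<noteq> a \<Longrightarrow> in_pcone a i q"
  using M_cone[OF i3 cone] Delta_M by blast

lemma Delta_proj: "q \<in> Delta \<Longrightarrow> q \<noteq> a \<Longrightarrow> proj a i q < proj a i b"
proof -
  assume q: "q \<in> Delta" "q \<noteq> a"
  define h where "h = G i b - G i a"
  have h0: "h > 0" unfolding h_def using in_pcone_pos[OF cone] by simp
  obtain s0 where s0: "0 < s0" "s0 < 1" "p = a + s0 *\<^sub>R (b - a)" by (rule s0_ex)
  have "G i p - G i a = s0 * h" unfolding h_def s0(3) by (simp add: G_add G_diff G_scale)
  then have X: "G i p - G i a < h" using s0 h0 by (simp add: mult_less_cancel_right1)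
  have "G i w \<le> G i b" using M_top[OF i3 cone wM] .
  moreover have "G i w \<noteq> G i b" using gp_tie[OF gp wV V(2) wb i3] .
  ultimately have Y: "G i w - G i a < h" unfolding h_def by simp
  have st: "sg q \<ge> 0" "tg q \<ge> 0" "sg q + tg q \<le> 1" "sg q + tg q > 0"
    using q Delta_pos unfolding Delta_def by auto
  have "sg q * (G i p - G i a) + tg q * (G i w - G i a) < (sg q + tg q) * h"
  proof (cases "sg q > 0")
    case True
    then have "sg q * (G i p - G i a) < sg q * h" using X by simp
    moreover have "tg q * (G i w - G i a) \<le> tg q * h" using Y st by (intro mult_left_mono) auto
    ultimately show ?thesis by (simp add: algebra_simps)
  next
    case False
    then have "sg q = 0" using st by simp
    then have "tg q > 0" using st by simp
    then have "tg q * (G i w - G i a) < tg q * h" using Y by simp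
    then show ?thesis using \<open>sg q = 0\<close> by simp
  qed
  also have "\<dots> \<le> h" using st h0 by (simp add: mult_le_cancel_right1)
  finally have "G i q - G i a < h" using G_decomp[of i q] by simp
  then show ?thesis unfolding proj_G h_def by simp
qed

lemma w_Cand: "w \<in> Cand"
proof -
  have "w \<in> closed_segment c d" using wcd by auto
  then have "\<forall>P\<in>S. w \<notin> poly_interior P" using visible_pt[OF visCD] by blast
  moreover have "w \<in> Delta" unfolding Delta_def using sg_w tg_w by simp
  ultimately show ?thesis unfolding Cand_def using wV wa by simp
qed

lemma Cand_finite: "finite Cand"
proof -
  have "finite V" using os unfolding obstacle_setting_def by blast
  then show ?thesis unfolding Cand_def by simp
qed

lemma min_ex: obtains z where "z \<in> Cand" "\<And>v. v \<in> Cand \<Longrightarrow> th z \<le> th v"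
proof -
  have ne: "Cand \<noteq> {}" using w_Cand by blast
  have "Min (th ` Cand) \<in> th ` Cand" using Min_in[of "th ` Cand"] Cand_finite ne by simp
  then obtain z where "z \<in> Cand" "th z = Min (th ` Cand)" by auto
  moreover have "\<And>v. v \<in> Cand \<Longrightarrow> Min (th ` Cand) \<le> th v" using Cand_finite by simp
  ultimately show thesis using that by metis
qed

end

lemma cross_comb: "cross (x1 *\<^sub>R P + y1 *\<^sub>R W) (x2 *\<^sub>R P + y2 *\<^sub>R W) = (x1 * y2 - y1 * x2) * cross P W"
  by (simp add: cross_def algebra_simps)

locale core2 = core +
  fixes z :: pt
  assumes zC: "z \<in> Cand" and zmin: "\<And>v. v \<in> Cand \<Longrightarrow> th z \<le> th v"
begin

lemma zV: "z \<in> V" and zD: "z \<in> Delta" and za: "z \<noteq> a" and znoint: "\<And>P. P \<in> S \<Longrightarrow> z \<notin> poly_interior P"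
  using zC unfolding Cand_def by auto

definition "thz = th z"
definition "Fpw q = 1 - sg q - tg q"
definition "Faz q = thz * sg q - (1 - thz) * tg q"
definition "R = {q. tg q \<ge> 0 \<and> Fpw q \<ge> 0 \<and> Faz q \<ge> 0}"
definition "Ri = {q. tg q > 0 \<and> Fpw q > 0 \<and> Faz q > 0}"

lemma aff_Fpw: "lin_aff Fpw"
  unfolding Fpw_def[abs_def] by (intro aff_diff aff_const aff_sg aff_tg)

lemma aff_Faz: "lin_aff Faz"
  unfolding Faz_def[abs_def] by (intro aff_diff aff_scale aff_sg aff_tg)

lemma zsum: "sg z + tg z > 0" using Delta_pos[OF zD za] .

lemma tz_pos: "tg z > 0"
proof (rule ccontr)
  assume "\<not> tg z > 0"
  then have t0: "tg z = 0" using zD unfolding Delta_def by auto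
  have zb: "z \<noteq> b" using zD sg_b tg_b unfolding Delta_def by auto
  obtain s0 where s0: "0 < s0" "s0 < 1" "p = a + s0 *\<^sub>R (b - a)" by (rule s0_ex)
  have "z - a = sg z *\<^sub>R (p - a)" using decomp[of z] t0 by (simp add: algebra_simps)
  also have "\<dots> = (sg z * s0) *\<^sub>R (b - a)" using s0(3) by simp
  finally have za_eq: "z - a = (sg z * s0) *\<^sub>R (b - a)" .
  have "cross (b - a) (z - a) = 0" unfolding za_eq by (rule cross_self_scale)
  then show False using gp_cross[OF gp V(1,2) zV dist(1) za[symmetric] zb[symmetric]] by simp
qed

lemma thz_pos: "thz > 0" and thz_le: "thz \<le> 1"
proof -
  have "sg z \<ge> 0" using zD unfolding Delta_def by auto
  then show "thz > 0" "thz \<le> 1" unfolding thz_def th_def using tz_pos zsum by auto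
qed

lemma thz_eq: "thz * (sg z + tg z) = tg z"
  unfolding thz_def th_def using zsum by simp

lemma Faz_z: "Faz z = 0"
  unfolding Faz_def using thz_eq by (simp add: algebra_simps)

lemma Faz_a: "Faz a = 0" unfolding Faz_def by (simp add: sg_a tg_a)
lemma Fpw_a: "Fpw a = 1" unfolding Fpw_def by (simp add: sg_a tg_a)
lemma Fpw_p: "Fpw p = 0" unfolding Fpw_def by (simp add: sg_p tg_p)
lemma Fpw_w: "Fpw w = 0" unfolding Fpw_def by (simp add: sg_w tg_w)

lemma R_Delta: "q \<in> R \<Longrightarrow> q \<in> Delta"
proof -
  assume q: "q \<in> R"
  have "thz * sg q \<ge> (1 - thz) * tg q" using q unfolding R_def Faz_def by auto
  moreover have "(1 - thz) * tg q \<ge> 0" using q thz_le unfolding R_def by auto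
  ultimately have "thz * sg q \<ge> 0" by linarith
  then have "sg q \<ge> 0" using thz_pos by (simp add: zero_le_mult_iff)
  then show ?thesis using q unfolding R_def Delta_def Fpw_def by auto
qed

lemma corner_R:
  assumes cV: "c' \<in> V" and cn: "\<forall>P\<in>S. c' \<notin> poly_interior P" and cR: "c' \<in> R" and ca: "c' \<noteq> a"
  shows "c' = z"
proof (rule ccontr)
  assume cz: "c' \<noteq> z"
  have cD: "c' \<in> Delta" using R_Delta[OF cR] .
  have cC: "c' \<in> Cand" unfolding Cand_def using cV cD ca cn by auto
  have le: "thz \<le> th c'" using zmin[OF cC] unfolding thz_def .
  have cs: "sg c' + tg c' > 0" using Delta_pos[OF cD ca] .
  have "thz * sg c' \<ge> (1 - thz) * tg c'" using cR unfolding R_def Faz_def by auto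
  then have "thz * (sg c' + tg c') \<ge> tg c'" by (simp add: algebra_simps)
  then have "th c' \<le> thz" unfolding th_def using cs by (simp add: divide_le_eq)
  then have "th c' = thz" using le by simp
  then have tc: "tg c' = thz * (sg c' + tg c')" unfolding th_def using cs by (simp add: field_simps)
  have tz: "tg z = thz * (sg z + tg z)" using thz_eq by simp
  have key: "sg z * tg c' - tg z * sg c' = 0"
  proof (cases "thz = 1")
    case True
    then have "sg c' = 0" "sg z = 0" using tc tz by auto
    then show ?thesis by simp
  next
    case False
    have "sg z * tg c' - tg z * sg c' = thz * (sg z * tg c' - tg z * sg c')"
      by (subst tc, subst tz) (simp add: algebra_simps)
    then have "(1 - thz) * (sg z * tg c' - tg z * sg c') = 0" by (simp add: algebra_simps)
    then show ?thesis using False by simp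
  qed
  have "cross (z - a) (c' - a) = (sg z * tg c' - tg z * sg c') * cross (p - a) (w - a)"
  proof -
    have "z - a = sg z *\<^sub>R (p - a) + tg z *\<^sub>R (w - a)" using decomp[of z] by (simp add: algebra_simps)
    moreover have "c' - a = sg c' *\<^sub>R (p - a) + tg c' *\<^sub>R (w - a)" using decomp[of c'] by (simp add: algebra_simps)
    ultimately show ?thesis using cross_comb by simp
  qed
  then have "cross (z - a) (c' - a) = 0" using key by simp
  then show False using gp_cross[OF gp V(1) zV cV za[symmetric] ca[symmetric] cz[symmetric]] by simp
qed

lemma seg_az_R: "q \<in> closed_segment a z \<Longrightarrow> q \<in> R"
proof -
  assume "q \<in> closed_segment a z"
  then obtain u where u: "0 \<le> u" "u \<le> 1" "q = a + u *\<^sub>R (z - a)" by (rule closed_seg_param)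
  have t: "tg q = u * tg z" using aff_line[OF aff_tg, of a u z] u(3) tg_a by simp
  have s: "sg q = u * sg z" using aff_line[OF aff_sg, of a u z] u(3) sg_a by simp
  have f: "Faz q = 0" using aff_line[OF aff_Faz, of a u z] u(3) Faz_a Faz_z by simp
  have "sg z + tg z \<le> 1" using zD unfolding Delta_def by auto
  then have "u * (sg z + tg z) \<le> 1" using u zsum by (meson less_eq_real_def mult_le_one)
  then have "Fpw q \<ge> 0" unfolding Fpw_def s t by (simp add: algebra_simps)
  moreover have "tg q \<ge> 0" unfolding t using u tz_pos by simp
  ultimately show "q \<in> R" unfolding R_def using f by simp
qed

lemma sector_R: obtains e where "e > 0" "sector a b z \<inter> ball a e \<subseteq> R"
proof -
  define K where "K = norm (w - a) + norm (p - a)"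
  define e where "e = \<bar>D\<bar> / (2 * K + 1)"
  have K0: "K \<ge> 0" unfolding K_def by simp
  have D0: "\<bar>D\<bar> > 0" using D_ne by simp
  have e0: "e > 0" unfolding e_def using D0 K0 by simp
  have "sector a b z \<inter> ball a e \<subseteq> R"
  proof
    fix q assume q: "q \<in> sector a b z \<inter> ball a e"
    then obtain s t where st: "s \<ge> 0" "t \<ge> 0" "q = a + s *\<^sub>R (b - a) + t *\<^sub>R (z - a)"
      unfolding sector_def by auto
    have nq: "norm (q - a) < e" using q by (simp add: dist_norm norm_minus_commute)
    have "tg q = t * tg z" using aff_comb2[OF aff_tg, of a s b t z] st(3) tg_a tg_b by simp
    then have T: "tg q \<ge> 0" using st tz_pos by simp
    have "Faz b = thz * sg b" unfolding Faz_def using tg_b by simp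
    then have Fb: "Faz b \<ge> 0" using thz_pos sg_b by simp
    have "Faz q = s * Faz b" using aff_comb2[OF aff_Faz, of a s b t z] st(3) Faz_a Faz_z by simp
    then have F: "Faz q \<ge> 0" using st Fb by simp
    have "\<bar>cross (q - a) (w - a)\<bar> + \<bar>cross (p - a) (q - a)\<bar> \<le> 2 * norm (q - a) * K"
      using cross_bound[of "q - a" "w - a"] cross_bound[of "p - a" "q - a"] unfolding K_def
      by (simp add: algebra_simps)
    also have "\<dots> \<le> 2 * e * K" using nq K0 by (intro mult_right_mono) auto
    also have "\<dots> < \<bar>D\<bar>"
    proof -
      have "2 * e * K = \<bar>D\<bar> * (2 * K / (2 * K + 1))" unfolding e_def by simp
      moreover have "2 * K / (2 * K + 1) < 1" using K0 by simp
      ultimately show ?thesis using D0 by (metis mult.right_neutral mult_strict_left_mono)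
    qed
    finally have L: "\<bar>cross (q - a) (w - a)\<bar> + \<bar>cross (p - a) (q - a)\<bar> < \<bar>D\<bar>" .
    have "sg q + tg q \<le> \<bar>sg q\<bar> + \<bar>tg q\<bar>" by simp
    also have "\<dots> = (\<bar>cross (q - a) (w - a)\<bar> + \<bar>cross (p - a) (q - a)\<bar>) / \<bar>D\<bar>"
      unfolding sg_def tg_def by (simp add: add_divide_distrib)
    also have "\<dots> < 1" using L D0 by simp
    finally have "Fpw q \<ge> 0" unfolding Fpw_def by simp
    then show "q \<in> R" unfolding R_def using T F by simp
  qed
  then show thesis using that e0 by blast
qed

lemma Ri_convex: "convex Ri"
proof (rule convexI)
  fix x y :: pt and u v :: real
  assume xy: "x \<in> Ri" "y \<in> Ri" "0 \<le> u" "0 \<le> v" "u + v = 1"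
  then have u1: "u = 1 - v" by simp
  have e: "F (u *\<^sub>R x + v *\<^sub>R y) = u * F x + v * F y" if "lin_aff F" for F
    using aff_seg[OF that, of v x y] u1 by simp
  have pos: "u * A + v * B > 0" if "A > 0" "B > 0" for A B :: real
  proof (cases "u = 0")
    case True then show ?thesis using xy that by simp
  next
    case False then have "u * A > 0" using xy that by simp
    moreover have "v * B \<ge> 0" using xy that by simp
    ultimately show ?thesis by linarith
  qed
  show "u *\<^sub>R x + v *\<^sub>R y \<in> Ri" using xy unfolding Ri_def
    by (simp add: e aff_tg aff_Fpw aff_Faz pos)
qed

lemma centroid: "\<exists>m. m \<in> Ri"
proof -
  define m where "m = a + ((2 - thz) / 3) *\<^sub>R (p - a) + (thz / 3) *\<^sub>R (w - a)"
  have sm: "sg m = (2 - thz) / 3" using aff_comb2[OF aff_sg, of a "(2 - thz)/3" p "thz/3" w] sg_a sg_p sg_w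
    unfolding m_def by simp
  have tm: "tg m = thz / 3" using aff_comb2[OF aff_tg, of a "(2 - thz)/3" p "thz/3" w] tg_a tg_p tg_w
    unfolding m_def by simp
  have "tg m > 0" "Fpw m > 0" "Faz m > 0"
    unfolding Fpw_def Faz_def sm tm using thz_pos thz_le by (auto simp: field_simps)
  then show ?thesis unfolding Ri_def by blast
qed

lemma R_closure: "R \<subseteq> closure Ri"
proof
  fix q assume q: "q \<in> R"
  obtain m where m: "m \<in> Ri" using centroid by blast
  show "q \<in> closure Ri" unfolding closure_approachable
  proof (intro allI impI)
    fix e :: real assume e: "e > 0"
    define t where "t = min 1 (e / (norm (m - q) + 1))"
    have t0: "t > 0" "t \<le> 1" unfolding t_def using e by (auto simp: add_nonneg_pos)
    define y where "y = q + t *\<^sub>R (m - q)"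
    have pos: "F y > 0" if "lin_aff F" "F q \<ge> 0" "F m > 0" for F
    proof -
      have "F y = F q + t * (F m - F q)" unfolding y_def by (rule aff_line[OF that(1)])
      also have "\<dots> = (1 - t) * F q + t * F m" by (simp add: algebra_simps)
      finally show ?thesis using that t0 by (smt (verit) mult_nonneg_nonneg mult_pos_pos)
    qed
    have "y \<in> Ri" using q m unfolding R_def Ri_def by (auto intro!: pos aff_tg aff_Fpw aff_Faz)
    moreover have "dist y q < e"
    proof -
      have "dist y q = t * norm (m - q)" unfolding y_def dist_norm using t0 by simp
      also have "\<dots> \<le> (e / (norm (m - q) + 1)) * norm (m - q)"
        unfolding t_def by (intro mult_right_mono) auto
      also have "\<dots> < e"
      proof -
        have h1: "norm (m - q) < norm (m - q) + 1" by simp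
        have h2: "0 < norm (m - q) + 1" by (smt (verit) norm_ge_zero)
        have "norm (m - q) / (norm (m - q) + 1) < 1" using h1 h2 by (simp add: divide_less_eq_1_pos)
        then show ?thesis using e by (metis mult.commute mult.right_neutral mult_strict_left_mono times_divide_eq_right)
      qed
      finally show ?thesis .
    qed
    ultimately show "\<exists>y\<in>Ri. dist y q < e" by blast
  qed
qed

end

lemma seg_inner:
  assumes r: "rr \<in> open_segment xx ee" and y: "y \<in> closed_segment xx rr" and yx: "y \<noteq> xx"
  shows "y \<in> open_segment xx ee"
proof -
  have rc: "rr \<in> closed_segment xx ee" using r by (auto simp: open_segment_def)
  have sub: "closed_segment xx rr \<subseteq> closed_segment xx ee"
    using rc by (simp add: subset_closed_segment)
  have "y \<noteq> ee"
  proof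
    assume yo: "y = ee"
    obtain t where t: "0 < t" "t < 1" "rr = xx + t *\<^sub>R (ee - xx)" "xx \<noteq> ee" using open_seg_param[OF r] by metis
    obtain u where u: "0 \<le> u" "u \<le> 1" "y = xx + u *\<^sub>R (rr - xx)" using closed_seg_param[OF y] by metis
    have "ee = xx + (u * t) *\<^sub>R (ee - xx)" using u(3) t(3) yo by simp
    then have "ee - xx = (u * t) *\<^sub>R (ee - xx)" by (metis add_diff_cancel_left')
    then have "(1 - u * t) *\<^sub>R (ee - xx) = 0" by (simp add: algebra_simps)
    moreover have "u * t < 1" using u t by (smt (verit) mult_left_le_one_le mult_nonneg_nonneg)
    ultimately show False using t(4) by simp
  qed
  then show ?thesis using sub y yx by (auto simp: open_segment_def)
qed

lemma aff_zero_ext: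
  assumes "lin_aff F" "p \<in> open_segment x y" "F x = 0" "F p = 0"
  shows "F y = 0"
proof -
  obtain u where u: "0 < u" "u < 1" "p = x + u *\<^sub>R (y - x)" using open_seg_param[OF assms(2)] by metis
  have "F p = F x + u * (F y - F x)" unfolding u(3) by (rule aff_line[OF assms(1)])
  then show ?thesis using assms(3,4) u by simp
qed

context core2
begin

lemma Fpw_cd: "Fpw c = 0" "Fpw d = 0"
proof -
  have pdc: "p \<in> open_segment d c" using pcd by (simp add: open_segment_commute)
  show "Fpw c = 0" "Fpw d = 0"
  proof -
    { assume "w = c"
      then have "Fpw c = 0" "Fpw d = 0" using Fpw_w aff_zero_ext[OF aff_Fpw pcd _ Fpw_p] by auto }
    moreover
    { assume "w = d"
      then have "Fpw c = 0" "Fpw d = 0" using Fpw_w aff_zero_ext[OF aff_Fpw pdc _ Fpw_p] by auto }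
    ultimately show "Fpw c = 0" "Fpw d = 0" using wcd by blast+
  qed
qed

lemma p_R: "p \<in> R"
  unfolding R_def Fpw_def Faz_def using tg_p sg_p thz_pos by simp

lemma y_ab: assumes "y \<in> R" "tg y = 0" shows "y \<in> closed_segment a b"
proof -
  have yD: "y \<in> Delta" using R_Delta[OF assms(1)] .
  have s: "0 \<le> sg y" "sg y \<le> 1" using yD assms(2) unfolding Delta_def by auto
  have "y = (1 - sg y) *\<^sub>R a + sg y *\<^sub>R p" using decomp[of y] assms(2) by (simp add: algebra_simps)
  then have "y \<in> closed_segment a p" unfolding in_segment using s by blast
  moreover have "closed_segment a p \<subseteq> closed_segment a b"
    using pab by (intro subset_closed_segment[THEN iffD2]) (auto simp: open_segment_def)
  ultimately show ?thesis by blast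
qed

lemma y_cd: assumes "y \<in> R" "Fpw y = 0" shows "y \<in> closed_segment c d"
proof -
  have yD: "y \<in> Delta" using R_Delta[OF assms(1)] .
  have s: "sg y = 1 - tg y" using assms(2) unfolding Fpw_def by simp
  have t: "0 \<le> tg y" "tg y \<le> 1" using yD s unfolding Delta_def by auto
  have "y = (1 - tg y) *\<^sub>R p + tg y *\<^sub>R w" using decomp[of y] s by (simp add: algebra_simps)
  then have "y \<in> closed_segment p w" unfolding in_segment using t by blast
  moreover have "closed_segment p w \<subseteq> closed_segment c d"
    using pcd wcd by (intro subset_closed_segment[THEN iffD2]) (auto simp: open_segment_def)
  ultimately show ?thesis by blast
qed

lemma Ri_boundary:
  assumes P: "P \<in> S"
  shows "Ri \<inter> poly_boundary P = {}"
proof (rule ccontr)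
  assume "Ri \<inter> poly_boundary P \<noteq> {}"
  then obtain r where rRi: "r \<in> Ri" and rb: "r \<in> poly_boundary P" by blast
  obtain k where k: "k < length P" "r \<in> closed_segment (P!k) (P!((k+1) mod length P))"
    using boundary_edge[OF rb] by metis
  define c1 where "c1 = P!k"
  define c2 where "c2 = P!((k+1) mod length P)"
  have cV: "c1 \<in> V" "c2 \<in> V" using corners_V[OF os P k(1)] unfolding c1_def c2_def by auto
  have "length P > 0" using k(1) by linarith
  then have cset: "c1 \<in> set P" "c2 \<in> set P" unfolding c1_def c2_def using k(1) by auto
  have corner_Faz: "Faz c' = 0" if "c' \<in> set P" "c' \<in> R" for c'
  proof (cases "c' = a")
    case True then show ?thesis using Faz_a by simp
  next
    case False
    have "c' \<in> V" using os_V[OF os P] that(1) by auto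
    moreover have "\<forall>Q\<in>S. c' \<notin> poly_interior Q" using corner_not_inside[OF os P _ that(1)] by blast
    ultimately have "c' = z" using corner_R that(2) False by blast
    then show ?thesis using Faz_z by simp
  qed
  have corner_notRi: "c' \<notin> Ri" if "c' \<in> set P" for c'
  proof
    assume "c' \<in> Ri"
    then have "c' \<in> R" "Faz c' > 0" unfolding Ri_def R_def by auto
    then show False using corner_Faz[OF that] by simp
  qed
  have "r \<noteq> c1" using corner_notRi[OF cset(1)] rRi by blast
  have "r \<noteq> c2" using corner_notRi[OF cset(2)] rRi by blast
  have ro: "r \<in> open_segment c1 c2" using k(2) \<open>r \<noteq> c1\<close> \<open>r \<noteq> c2\<close> unfolding c1_def c2_def by (auto simp: open_segment_def)
  have ro2: "r \<in> open_segment c2 c1" using ro by (simp add: open_segment_commute)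
  obtain t0 where t0: "0 < t0" "t0 < 1" "r = c1 + t0 *\<^sub>R (c2 - c1)" using open_seg_param[OF ro] by metis
  have Faff: "F r = F c1 + t0 * (F c2 - F c1)" if "lin_aff F" for F
    unfolding t0(3) by (rule aff_line[OF that])
  have rpos: "tg r > 0" "Fpw r > 0" "Faz r > 0" using rRi unfolding Ri_def by auto
  have classify: "Faz y = 0"
    if cj: "cj = c1 \<or> cj = c2" and y: "y \<in> closed_segment cj r" "y \<noteq> r"
      and nn: "tg y \<ge> 0" "Fpw y \<ge> 0" "Faz y \<ge> 0"
      and alt: "y = cj \<or> tg y = 0 \<or> Fpw y = 0 \<or> Faz y = 0" for cj y
  proof -
    have yR: "y \<in> R" unfolding R_def using nn by simp
    show ?thesis
    proof (cases "y = cj")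
      case True
      have "cj \<in> set P" using cj cset by auto
      then show ?thesis using corner_Faz[of cj] yR True by blast
    next
      case ycj: False
      have yo: "y \<in> open_segment c1 c2"
      proof (cases "cj = c1")
        case True
        then show ?thesis using seg_inner[OF ro, of y] y ycj by simp
      next
        case False
        then have "cj = c2" using cj by simp
        then have "y \<in> open_segment c2 c1" using seg_inner[OF ro2, of y] y ycj by simp
        then show ?thesis by (simp add: open_segment_commute)
      qed
      have yo': "y \<in> open_segment (P!k) (P!((k+1) mod length P))" using yo unfolding c1_def c2_def .
      consider "tg y = 0" | "Fpw y = 0" | "Faz y = 0" using alt ycj by blast
      then show ?thesis
      proof cases
        case 1
        have yab: "y \<in> closed_segment a b" using y_ab[OF yR 1] .
        show ?thesis
        proof (cases "{a, b} = {c1, c2}")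
          case True
          then have "tg c1 = 0" "tg c2 = 0" using tg_a tg_b by (auto simp: doubleton_eq_iff)
          then have "tg r = 0" using Faff[OF aff_tg] by simp
          then show ?thesis using rpos by simp
        next
          case False
          then show ?thesis using edge_cross_vis[OF os gp P k(1) V(1,2) yo' yab visAB] unfolding c1_def c2_def by blast
        qed
      next
        case 2
        have ycd: "y \<in> closed_segment c d" using y_cd[OF yR 2] .
        show ?thesis
        proof (cases "{c, d} = {c1, c2}")
          case True
          then have "Fpw c1 = 0" "Fpw c2 = 0" using Fpw_cd by (auto simp: doubleton_eq_iff)
          then have "Fpw r = 0" using Faff[OF aff_Fpw] by simp
          then show ?thesis using rpos by simp
        next
          case False
          then show ?thesis using edge_cross_vis[OF os gp P k(1) V(3,4) yo' ycd visCD] unfolding c1_def c2_def by blast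
        qed
      next
        case 3 then show ?thesis .
      qed
    qed
  qed
  have half: "Faz cj \<le> 0" if cj: "cj = c1 \<or> cj = c2" and rne: "cj \<noteq> r" for cj
  proof -
    obtain y where y: "y \<in> closed_segment cj r" "y \<noteq> r" "tg y \<ge> 0" "Fpw y \<ge> 0" "Faz y \<ge> 0"
      "y = cj \<or> tg y = 0 \<or> Fpw y = 0 \<or> Faz y = 0"
      using walk[OF aff_tg aff_Fpw aff_Faz rpos rne] by metis
    have fy: "Faz y = 0" using classify[OF cj y] .
    obtain u where u: "0 \<le> u" "u \<le> 1" "y = cj + u *\<^sub>R (r - cj)" using closed_seg_param[OF y(1)] by metis
    have "u \<noteq> 1" using u y(2) by auto
    then have u1: "1 - u > 0" using u by simp
    have "Faz y = Faz cj + u * (Faz r - Faz cj)" unfolding u(3) by (rule aff_line[OF aff_Faz])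
    then have "(1 - u) * Faz cj = - (u * Faz r)" using fy by (simp add: algebra_simps)
    moreover have "u * Faz r \<ge> 0" using u rpos by simp
    ultimately have "(1 - u) * Faz cj \<le> 0" by simp
    then show ?thesis using u1 by (simp add: mult_le_0_iff)
  qed
  have "Faz c1 \<le> 0" "Faz c2 \<le> 0" using half \<open>r \<noteq> c1\<close> \<open>r \<noteq> c2\<close> by auto
  then have "(1 - t0) * Faz c1 + t0 * Faz c2 \<le> 0" using t0
    by (intro add_nonpos_nonpos mult_nonneg_nonpos) auto
  moreover have "Faz r = (1 - t0) * Faz c1 + t0 * Faz c2" using Faff[OF aff_Faz] by (simp add: algebra_simps)
  ultimately show False using rpos by simp
qed

lemma R_inside:
  assumes P: "P \<in> S"
  shows "R \<inter> poly_interior P = {}"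
proof (rule ccontr)
  assume "R \<inter> poly_interior P \<noteq> {}"
  then obtain q where qR: "q \<in> R" and qi: "q \<in> poly_interior P" by blast
  have conn: "connected Ri" using convex_connected[OF Ri_convex] .
  have disj: "Ri \<inter> poly_boundary P = {}" using Ri_boundary[OF P] .
  show False
  proof (cases "Ri \<inter> poly_interior P = {}")
    case False
    then obtain x where x: "x \<in> Ri" "x \<in> inside (poly_boundary P)" unfolding poly_interior_def by blast
    have sub: "Ri \<subseteq> inside (poly_boundary P)" using inside_component[OF x(2) conn x(1) disj] .
    have "p \<in> closure Ri" using R_closure p_R by blast
    then have "p \<in> closure (inside (poly_boundary P))" using closure_mono[OF sub] by blast
    then have "p \<in> poly_boundary P \<union> inside (poly_boundary P)"
      using closure_inside_subset[OF closed_boundary] by blast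
    moreover have "p \<notin> inside (poly_boundary P)"
      using visible_pt[OF visAB _ P] pab unfolding poly_interior_def by (auto simp: open_segment_def)
    moreover have "{a, b} \<noteq> {c, d}" using dist by (auto simp: doubleton_eq_iff)
    then have "p \<notin> poly_boundary P" using p_not_boundary[OF os gp P V _ pab pcd visAB visCD] by blast
    ultimately show False by blast
  next
    case True
    have "open (poly_interior P)" unfolding poly_interior_def using open_inside[OF closed_boundary] .
    then obtain e where e: "e > 0" "ball q e \<subseteq> poly_interior P" using qi open_contains_ball by blast
    have "q \<in> closure Ri" using R_closure qR by blast
    then obtain y where "y \<in> Ri" "dist y q < e" using e(1) unfolding closure_approachable by blast
    then have "y \<in> Ri \<inter> poly_interior P" using e(2) by (auto simp: dist_commute)
    then show False using True by blast
  qed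
qed

lemma result: "in_pcone a i z \<and> visible S a z \<and> \<not> separated S a b z \<and> proj a i z < proj a i b"
proof (intro conjI)
  show "in_pcone a i z" using Delta_cone[OF zD za] .
  show "proj a i z < proj a i b" using Delta_proj[OF zD za] .
  show "visible S a z" unfolding visible_def using seg_az_R R_inside by blast
  show "\<not> separated S a b z" unfolding separated_def
  proof
    assume "\<exists>P\<in>S. \<forall>e>0. sector a b z \<inter> ball a e \<inter> poly_interior P \<noteq> {}"
    then obtain P where P: "P \<in> S" "\<forall>e>0. sector a b z \<inter> ball a e \<inter> poly_interior P \<noteq> {}" by blast
    obtain e where e: "e > 0" "sector a b z \<inter> ball a e \<subseteq> R" by (rule sector_R)
    then show False using P R_inside[OF P(1)] by blast
  qed
qed

end

context core
begin

lemma better: "\<exists>z\<in>V. in_pcone a i z \<and> visible S a z \<and> \<not> separated S a b z \<and> proj a i z < proj a i b"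
proof -
  obtain z where z: "z \<in> Cand" "\<And>v. v \<in> Cand \<Longrightarrow> th z \<le> th v" using min_ex by metis
  interpret c2: core2 V S a b c d w p i z using z by unfold_locales auto
  have "z \<in> V" using z(1) unfolding Cand_def by simp
  then show ?thesis using c2.result by blast
qed

end

lemma core_contra:
  assumes os: "obstacle_setting V S" and gp: "general_position V"
    and htc: "half_theta_choice V S a b"
    and cd: "c \<in> V" "d \<in> V" "visible S c d"
    and dist: "a \<noteq> c" "a \<noteq> d" "b \<noteq> c" "b \<noteq> d" "c \<noteq> d"
    and p: "p \<in> open_segment a b" "p \<in> open_segment c d"
    and w: "w = c \<or> w = d" "w \<in> M a b"
  shows False
proof -
  obtain i where i: "i < 3" "in_pcone a i b" "visible S a b"
    "\<forall>w\<in>V. in_pcone a i w \<longrightarrow> visible S a w \<longrightarrow> \<not> separated S a b w \<longrightarrow> proj a i b \<le> proj a i w"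
    and ab: "a \<in> V" "b \<in> V"
    using htc unfolding half_theta_choice_def by blast
  have "a \<noteq> b" using i(2) unfolding in_pcone_def by auto
  interpret core V S a b c d w p i
    by unfold_locales (use os gp ab cd dist i p w \<open>a \<noteq> b\<close> in auto)
  obtain z where "z \<in> V" "in_pcone a i z" "visible S a z" "\<not> separated S a b z" "proj a i z < proj a i b"
    using better by blast
  then show False using i(4) by fastforce
qed

lemma main2:
  assumes os: "obstacle_setting V S" and gp: "general_position V"
    and h1: "half_theta_choice V S a b" and h2: "half_theta_choice V S c d"
    and ne: "{a, b} \<noteq> {c, d}"
    and p: "p \<in> open_segment a b" "p \<in> open_segment c d"
  shows False
proof -
  have V: "a \<in> V" "b \<in> V" "c \<in> V" "d \<in> V" using h1 h2 unfolding half_theta_choice_def by auto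
  have vis: "visible S a b" "visible S c d" using h1 h2 unfolding half_theta_choice_def by auto
  have pba: "p \<in> open_segment b a" "p \<in> open_segment d c" using p by (auto simp: open_segment_commute)
  have ab: "a \<noteq> b" "c \<noteq> d" using p by (auto simp: open_segment_def)
  have ac: "a \<noteq> c"
  proof
    assume "a = c"
    then have "b = d" using share_gp[OF gp V(1,2,4) p(1)] p(2) by simp
    then show False using ne \<open>a = c\<close> by simp
  qed
  have ad: "a \<noteq> d"
  proof
    assume "a = d"
    then have "b = c" using share_gp[OF gp V(1,2,3) p(1)] pba(2) by simp
    then show False using ne \<open>a = d\<close> by auto
  qed
  have bc: "b \<noteq> c"
  proof
    assume "b = c"
    then have "a = d" using share_gp[OF gp V(2,1,4) pba(1)] p(2) by simp
    then show False using ne \<open>b = c\<close> by auto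
  qed
  have bd: "b \<noteq> d"
  proof
    assume "b = d"
    then have "a = c" using share_gp[OF gp V(2,1,3) pba(1)] pba(2) by simp
    then show False using ne \<open>b = d\<close> by auto
  qed
  have "p \<in> closed_segment a b" "p \<in> closed_segment c d" using p by (auto simp: open_segment_def)
  then have "c \<in> M a b \<or> d \<in> M a b \<or> a \<in> M c d \<or> b \<in> M c d" by (rule pigeon)
  then show False
  proof (elim disjE)
    assume "c \<in> M a b"
    then show False using core_contra[OF os gp h1 V(3,4) vis(2) ac ad bc bd ab(2) p] by blast
  next
    assume "d \<in> M a b"
    then show False using core_contra[OF os gp h1 V(3,4) vis(2) ac ad bc bd ab(2) p] by blast
  next
    assume "a \<in> M c d"
    then show False using core_contra[OF os gp h2 V(1,2) vis(1) ac[symmetric] bc[symmetric] ad[symmetric] bd[symmetric] ab(1) p(2) p(1)] by blast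
  next
    assume "b \<in> M c d"
    then show False using core_contra[OF os gp h2 V(1,2) vis(1) ac[symmetric] bc[symmetric] ad[symmetric] bd[symmetric] ab(1) p(2) p(1)] by blast
  qed
qed

lemma edge_orient:
  assumes "G_inf_edge V S a b"
  obtains a' b' where "half_theta_choice V S a' b'" "{a', b'} = {a, b}" "open_segment a' b' = open_segment a b"
  using assms unfolding G_inf_edge_def
  by (metis insert_commute open_segment_commute)

theorem lemma2:
  fixes V :: "pt set" and S :: "pt list set"
  assumes "obstacle_setting V S"
    and "general_position V"
  shows "plane_graph (G_inf_edge V S)"
  unfolding plane_graph_def
proof (intro allI impI)
  fix a b c d
  assume e1: "G_inf_edge V S a b" and e2: "G_inf_edge V S c d" and ne: "{a, b} \<noteq> {c, d}"
  obtain a' b' where A: "half_theta_choice V S a' b'" "{a', b'} = {a, b}" "open_segment a' b' = open_segment a b"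
    using edge_orient[OF e1] by blast
  obtain c' d' where C: "half_theta_choice V S c' d'" "{c', d'} = {c, d}" "open_segment c' d' = open_segment c d"
    using edge_orient[OF e2] by blast
  show "open_segment a b \<inter> open_segment c d = {}"
  proof (rule ccontr)
    assume "open_segment a b \<inter> open_segment c d \<noteq> {}"
    then obtain p where "p \<in> open_segment a' b'" "p \<in> open_segment c' d'" using A(3) C(3) by blast
    moreover have "{a', b'} \<noteq> {c', d'}" using A(2) C(2) ne by simp
    ultimately show False using main2[OF assms A(1) C(1)] by blast
  qed
qed

end
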